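(* The ATE functional $\beta(P)=\mathbb{E}_P\big[\frac{YA}{\pi(\mathbb{S}(Z))}-\frac{Y(1-A)}{1-\pi(\mathbb{S}(Z))}\big]$ on $\mathbf{P}$ is pathwise differentiable. Specifically, let $\{P_\theta:\theta\in\Theta\}$ be a regular parametric submodel of $\mathbf{P}$ with $\Theta\subseteq\mathbb{R}^d$ open and bounded and $P_0=P_{\theta_0}$ for a unique $\theta_0$, chosen so that $\max_{a\in\{0,1\}}\sup_{\theta\in\Theta}\int y^2q_a(y,z;\theta)\,\nu_a(dy,dz)<\infty$, and let $\gamma(\theta)=\beta(P_\theta)$. Then $\gamma$ is differentiable at $\theta_0$ with gradient \[ \nabla\gamma(\theta_0)=\mathbb{E}_{P_0}[\varphi_1(Y,A,Z)\,\dot\ell(Y,A,Z;\theta_0)],\qquad \varphi_1(y,a,z)=\frac{ya}{\pi(\mathbb{S}(z))}-\frac{y(1-a)}{1-\pi(\mathbb{S}(z))}. \] Furthermore, the $L_2(P_0)$-projection of $\varphi_1$ onto $\dot{\mathbf{P}}$ is $\varphi_0(y,a,z)=\frac{a}{\pi(\mathbb{S}(z))}[y-m_\ast(1,z)]-\frac{1-a}{1-\pi(\mathbb{S}(z))}[y-m_\ast(0,z)]+m_\ast(1,z)-m_\ast(0,z)-\beta_0$.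
   Context: Let $\mu_0,\mu_1$ be $\sigma$-finite Borel measures on $\mathbb{R}$, $\mu_Z$ on $\mathbb{R}^k$, $\nu_a=\mu_a\otimes\mu_Z$, and $\nu$ on $\mathbb{R}\times\{0,1\}\times\mathbb{R}^k$ with $\nu(B\times\mathcal{A}\times C)=\sum_{a\in\mathcal{A}}\nu_a(B\times C)$. $\mathbf{Q}$ is a family of distributions of $W=(Y(0),Y(1),Z')'$ with $\mu_0\otimes\mu_1\otimes\mu_Z$-densities and $\mathbb{E}_Q[Y(a)^2]<\infty$; $q_a(\cdot;Q)$ the $\nu_a$-density of $(Y(a),Z)$; true $Q_0\in\mathbf{Q}$; $m_\ast(a,z)=\mathbb{E}_{Q_0}[Y(a)\mid Z=z]$, $\beta_0=\mathbb{E}_{Q_0}[Y(1)-Y(0)]$. With measurable $\mathbb{S}:\mathbb{R}^k\to\{1,\dots,\mathcal{S}\}$ and $\pi(s)\in(0,1)$, $\mathbf{P}$ is the family of laws of $X=(Y,A,Z)$ with $W\sim Q\in\mathbf{Q}$, $A$ conditionally independent of $W$ given $\mathbb{S}(Z)$, $A\mid\mathbb{S}(Z)=s\sim$ Bernoulli$(\pi(s))$, $Y=Y(1)A+Y(0)(1-A)$; $P_0$ corresponds to $Q_0$. A regular parametric submodel: $P_\theta$ has $\nu$-density $[q_1(y,z;\theta)\pi(\mathbb{S}(z))]^a[q_0(y,z;\theta)(1-\pi(\mathbb{S}(z)))]^{1-a}$ with $q_0(\cdot;\theta),q_1(\cdot;\theta)$ sharing a common $Z$-marginal, each $\theta\mapsto\sqrt{q_a(\cdot;\theta)}$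 differentiable in quadratic mean in $L_2(\nu_a)$ at $\theta_0$ with derivative $D_a$ and nonsingular $4\int D_aD_a'd\nu_a$. Score: $\dot\ell(y,a,z;\theta_0)=a\dot\ell_1(y,z)+(1-a)\dot\ell_0(y,z)$ with $\dot\ell_a=2D_aq_a(\cdot;Q_0)^{-1/2}\mathbb{I}\{q_a(\cdot;Q_0)>0\}$. $\dot{\mathbf{P}}$ is the set of $h\in L_2(P_0)$ with $\int h(y,a,z)q_a(y,z;Q_0)\nu_a(dy,dz)=0$ for each $a$ and $\int h(y,1,z)q_1(y,z;Q_0)\mu_1(dy)=\int h(y,0,z)q_0(y,z;Q_0)\mu_0(dy)$ for $\mu_Z$-a.e. $z$ (the tangent space of $\mathbf{P}$ at $P_0$). *)

theory Defs
  imports "HOL-Analysis.Analysis"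
begin

text \<open>Observations X = (Y, A, Z) with Y real, A in {0,1} (encoded as nat), Z in real^'k.
  Functions of the observation are written curried as f y a z.\<close>

definition nuA :: "real measure \<Rightarrow> real measure \<Rightarrow> (real, 'k::finite) vec measure \<Rightarrow> nat
    \<Rightarrow> (real \<times> (real, 'k) vec) measure" where
  "nuA \<mu>0 \<mu>1 \<mu>Z a = (if a = 1 then \<mu>1 else \<mu>0) \<Otimes>\<^sub>M \<mu>Z"

definition pw :: "(nat \<Rightarrow> real) \<Rightarrow> ('z \<Rightarrow> nat) \<Rightarrow> nat \<Rightarrow> 'z \<Rightarrow> real" where
  "pw \<pi> S a z = (if a = 1 then \<pi> (S z) else 1 - \<pi> (S z))"

text \<open>Expectation under the law P with nu-density
  [q_1(y,z) pi(S z)]^a [q_0(y,z)(1 - pi(S z))]^(1-a), i.e. the integral against nu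
  written as the sum over a in {0,1} of the nu_a integrals.\<close>
definition EP :: "real measure \<Rightarrow> real measure \<Rightarrow> (real, 'k::finite) vec measure
    \<Rightarrow> (nat \<Rightarrow> real) \<Rightarrow> ((real, 'k) vec \<Rightarrow> nat)
    \<Rightarrow> (nat \<Rightarrow> real \<times> (real, 'k) vec \<Rightarrow> real)
    \<Rightarrow> (real \<Rightarrow> nat \<Rightarrow> (real, 'k) vec \<Rightarrow> 'b::{banach, second_countable_topology}) \<Rightarrow> 'b" where
  "EP \<mu>0 \<mu>1 \<mu>Z \<pi> S q f =
     (\<Sum>a\<in>{0,1}. \<integral>x. (q a x * pw \<pi> S a (snd x)) *\<^sub>R f (fst x) a (snd x) \<partial>(nuA \<mu>0 \<mu>1 \<mu>Z a))"

definition L2P :: "real measure \<Rightarrow> real measure \<Rightarrow> (real, 'k::finite) vec measure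
    \<Rightarrow> (nat \<Rightarrow> real) \<Rightarrow> ((real, 'k) vec \<Rightarrow> nat)
    \<Rightarrow> (nat \<Rightarrow> real \<times> (real, 'k) vec \<Rightarrow> real)
    \<Rightarrow> (real \<Rightarrow> nat \<Rightarrow> (real, 'k) vec \<Rightarrow> real) \<Rightarrow> bool" where
  "L2P \<mu>0 \<mu>1 \<mu>Z \<pi> S q h \<longleftrightarrow>
     (\<forall>a\<in>{0,1}. (\<lambda>x. h (fst x) a (snd x)) \<in> borel_measurable (nuA \<mu>0 \<mu>1 \<mu>Z a) \<and>
        integrable (nuA \<mu>0 \<mu>1 \<mu>Z a) (\<lambda>x. q a x * pw \<pi> S a (snd x) * (h (fst x) a (snd x))\<^sup>2))"

definition tangent_space :: "real measure \<Rightarrow> real measure \<Rightarrow> (real, 'k::finite) vec measure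
    \<Rightarrow> (nat \<Rightarrow> real) \<Rightarrow> ((real, 'k) vec \<Rightarrow> nat)
    \<Rightarrow> (nat \<Rightarrow> real \<times> (real, 'k) vec \<Rightarrow> real)
    \<Rightarrow> (real \<Rightarrow> nat \<Rightarrow> (real, 'k) vec \<Rightarrow> real) set" where
  "tangent_space \<mu>0 \<mu>1 \<mu>Z \<pi> S q0 =
     {h. L2P \<mu>0 \<mu>1 \<mu>Z \<pi> S q0 h \<and>
         (\<forall>a\<in>{0,1}. (\<integral>x. h (fst x) a (snd x) * q0 a x \<partial>(nuA \<mu>0 \<mu>1 \<mu>Z a)) = 0) \<and>
         (AE z in \<mu>Z. (\<integral>y. h y 1 z * q0 1 (y, z) \<partial>\<mu>1) = (\<integral>y. h y 0 z * q0 0 (y, z) \<partial>\<mu>0))}"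

definition is_L2_projection where
  "is_L2_projection \<mu>0 \<mu>1 \<mu>Z \<pi> S q0 T f g \<longleftrightarrow>
     g \<in> T \<and> (\<forall>h\<in>T. EP \<mu>0 \<mu>1 \<mu>Z \<pi> S q0 (\<lambda>y a z. (f y a z - g y a z) * h y a z) = (0::real))"

definition dqm :: "((real, 'd::finite) vec \<Rightarrow> 'x \<Rightarrow> real) \<Rightarrow> 'x measure \<Rightarrow> (real, 'd) vec set
    \<Rightarrow> (real, 'd) vec \<Rightarrow> ('x \<Rightarrow> (real, 'd) vec) \<Rightarrow> bool" where
  "dqm f M \<Theta> \<theta>0 D \<longleftrightarrow>
     (\<forall>\<theta>\<in>\<Theta>. f \<theta> \<in> borel_measurable M \<and> integrable M (\<lambda>x. (f \<theta> x)\<^sup>2)) \<and>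
     D \<in> borel_measurable M \<and> (\<forall>i. integrable M (\<lambda>x. (D x $ i)\<^sup>2)) \<and>
     ((\<lambda>\<theta>. sqrt (\<integral>x. (f \<theta> x - f \<theta>0 x - (\<theta> - \<theta>0) \<bullet> D x)\<^sup>2 \<partial>M) / norm (\<theta> - \<theta>0))
        \<longlongrightarrow> 0) (at \<theta>0 within \<Theta>)"

definition info_matrix :: "'x measure \<Rightarrow> ('x \<Rightarrow> (real, 'd::finite) vec) \<Rightarrow> real ^ 'd ^ 'd" where
  "info_matrix M D = (\<chi> i j. 4 * (\<integral>x. D x $ i * D x $ j \<partial>M))"

definition score_a :: "(nat \<Rightarrow> 'x \<Rightarrow> real) \<Rightarrow> (nat \<Rightarrow> 'x \<Rightarrow> (real, 'd::finite) vec)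
    \<Rightarrow> nat \<Rightarrow> 'x \<Rightarrow> (real, 'd) vec" where
  "score_a q0 D a x = (if q0 a x > 0 then (2 / sqrt (q0 a x)) *\<^sub>R D a x else 0)"

definition score :: "(nat \<Rightarrow> real \<times> 'z \<Rightarrow> real) \<Rightarrow> (nat \<Rightarrow> real \<times> 'z \<Rightarrow> (real, 'd::finite) vec)
    \<Rightarrow> real \<Rightarrow> nat \<Rightarrow> 'z \<Rightarrow> (real, 'd) vec" where
  "score q0 D y a z = real a *\<^sub>R score_a q0 D 1 (y, z) + (1 - real a) *\<^sub>R score_a q0 D 0 (y, z)"

definition phi1 :: "(nat \<Rightarrow> real) \<Rightarrow> ('z \<Rightarrow> nat) \<Rightarrow> real \<Rightarrow> nat \<Rightarrow> 'z \<Rightarrow> real" where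
  "phi1 \<pi> S y a z = y * real a / \<pi> (S z) - y * (1 - real a) / (1 - \<pi> (S z))"

text \<open>m_*(a,z) = E_{Q_0}[Y(a) | Z = z], computed from the density q_a(.;Q_0) of (Y(a), Z)\<close>
definition cond_mean :: "real measure \<Rightarrow> (real \<times> 'z \<Rightarrow> real) \<Rightarrow> 'z \<Rightarrow> real" where
  "cond_mean \<mu>a qa z = (\<integral>y. y * qa (y, z) \<partial>\<mu>a) / (\<integral>y. qa (y, z) \<partial>\<mu>a)"

definition phi0 :: "real measure \<Rightarrow> real measure \<Rightarrow> (nat \<Rightarrow> real) \<Rightarrow> ('z \<Rightarrow> nat)
    \<Rightarrow> (nat \<Rightarrow> real \<times> 'z \<Rightarrow> real) \<Rightarrow> real \<Rightarrow> real \<Rightarrow> nat \<Rightarrow> 'z \<Rightarrow> real" where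
  "phi0 \<mu>0 \<mu>1 \<pi> S q0 \<beta>0 y a z =
     real a / \<pi> (S z) * (y - cond_mean \<mu>1 (q0 1) z)
     - (1 - real a) / (1 - \<pi> (S z)) * (y - cond_mean \<mu>0 (q0 0) z)
     + cond_mean \<mu>1 (q0 1) z - cond_mean \<mu>0 (q0 0) z - \<beta>0"

end

theory Submission
  imports Defs
begin


lemma abs_mult_le_sq: "\<bar>(a::real) * b\<bar> \<le> (a\<^sup>2 + b\<^sup>2) / 2"
proof -
  have "0 \<le> (\<bar>a\<bar> - \<bar>b\<bar>)\<^sup>2" by simp
  then show ?thesis by (simp add: power2_eq_square abs_mult algebra_simps)
qed

lemma integrable_prod_sq:
  fixes u v w :: "'a \<Rightarrow> real"
  assumes [measurable]: "u \<in> borel_measurable M" "v \<in> borel_measurable M" "w \<in> borel_measurable M"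
    and w0: "\<And>x. 0 \<le> w x"
    and iu: "integrable M (\<lambda>x. (u x)\<^sup>2 * w x)" and iv: "integrable M (\<lambda>x. (v x)\<^sup>2 * w x)"
  shows "integrable M (\<lambda>x. u x * v x * w x)"
proof (rule Bochner_Integration.integrable_bound)
  show "integrable M (\<lambda>x. ((u x)\<^sup>2 * w x + (v x)\<^sup>2 * w x) / 2)"
    using iu iv by auto
  show "(\<lambda>x. u x * v x * w x) \<in> borel_measurable M" by measurable
  show "AE x in M. norm (u x * v x * w x) \<le> norm (((u x)\<^sup>2 * w x + (v x)\<^sup>2 * w x) / 2)"
  proof (intro AE_I2)
    fix x
    have "\<bar>u x * v x * w x\<bar> = \<bar>u x * v x\<bar> * w x" using w0[of x] by (simp add: abs_mult)
    also have "\<dots> \<le> ((u x)\<^sup>2 + (v x)\<^sup>2) / 2 * w x"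
      using abs_mult_le_sq[of "u x" "v x"] w0[of x] by (rule mult_right_mono)
    also have "\<dots> = ((u x)\<^sup>2 * w x + (v x)\<^sup>2 * w x) / 2" by (simp add: algebra_simps)
    also have "\<dots> \<le> \<bar>((u x)\<^sup>2 * w x + (v x)\<^sup>2 * w x) / 2\<bar>" by (rule abs_ge_self)
    finally show "norm (u x * v x * w x) \<le> norm (((u x)\<^sup>2 * w x + (v x)\<^sup>2 * w x) / 2)" by simp
  qed
qed

lemma integrable_prod_sq1:
  fixes u v :: "'a \<Rightarrow> real"
  assumes [measurable]: "u \<in> borel_measurable M" "v \<in> borel_measurable M"
    and iu: "integrable M (\<lambda>x. (u x)\<^sup>2)" and iv: "integrable M (\<lambda>x. (v x)\<^sup>2)"
  shows "integrable M (\<lambda>x. u x * v x)"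
  using integrable_prod_sq[of u M v "\<lambda>_. 1"] assms by simp

lemma CS_integral:
  fixes u v :: "'a \<Rightarrow> real"
  assumes [measurable]: "u \<in> borel_measurable M" "v \<in> borel_measurable M"
    and iu: "integrable M (\<lambda>x. (u x)\<^sup>2)" and iv: "integrable M (\<lambda>x. (v x)\<^sup>2)"
  shows "(\<integral>x. \<bar>u x * v x\<bar> \<partial>M) \<le> sqrt (\<integral>x. (u x)\<^sup>2 \<partial>M) * sqrt (\<integral>x. (v x)\<^sup>2 \<partial>M)"
proof -
  have iuv: "integrable M (\<lambda>x. \<bar>u x * v x\<bar>)"
    using integrable_prod_sq1[OF assms] by (rule integrable_abs)
  have "(\<integral>\<^sup>+x. ennreal \<bar>u x\<bar> * ennreal \<bar>v x\<bar> \<partial>M)\<^sup>2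
      \<le> (\<integral>\<^sup>+x. (ennreal \<bar>u x\<bar>)^2 \<partial>M) * (\<integral>\<^sup>+x. (ennreal \<bar>v x\<bar>)^2 \<partial>M)"
    by (rule Cauchy_Schwarz_nn_integral) measurable
  also have "(\<lambda>x. ennreal \<bar>u x\<bar> * ennreal \<bar>v x\<bar>) = (\<lambda>x. ennreal \<bar>u x * v x\<bar>)"
    by (simp add: ennreal_mult abs_mult)
  also have "(\<lambda>x. (ennreal \<bar>u x\<bar>)^2) = (\<lambda>x. ennreal ((u x)\<^sup>2))"
    by (simp add: ennreal_power)
  also have "(\<lambda>x. (ennreal \<bar>v x\<bar>)^2) = (\<lambda>x. ennreal ((v x)\<^sup>2))"
    by (simp add: ennreal_power)
  also have "(\<integral>\<^sup>+x. ennreal \<bar>u x * v x\<bar> \<partial>M) = ennreal (\<integral>x. \<bar>u x * v x\<bar> \<partial>M)"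
    by (rule nn_integral_eq_integral[OF iuv]) simp
  also have "(\<integral>\<^sup>+x. ennreal ((u x)\<^sup>2) \<partial>M) = ennreal (\<integral>x. (u x)\<^sup>2 \<partial>M)"
    by (rule nn_integral_eq_integral[OF iu]) simp
  also have "(\<integral>\<^sup>+x. ennreal ((v x)\<^sup>2) \<partial>M) = ennreal (\<integral>x. (v x)\<^sup>2 \<partial>M)"
    by (rule nn_integral_eq_integral[OF iv]) simp
  finally have "ennreal ((\<integral>x. \<bar>u x * v x\<bar> \<partial>M)\<^sup>2) \<le> ennreal ((\<integral>x. (u x)\<^sup>2 \<partial>M) * (\<integral>x. (v x)\<^sup>2 \<partial>M))"
    by (simp add: ennreal_power ennreal_mult)
  then have "(\<integral>x. \<bar>u x * v x\<bar> \<partial>M)\<^sup>2 \<le> (\<integral>x. (u x)\<^sup>2 \<partial>M) * (\<integral>x. (v x)\<^sup>2 \<partial>M)"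
    by (subst (asm) ennreal_le_iff) auto
  then have "sqrt ((\<integral>x. \<bar>u x * v x\<bar> \<partial>M)\<^sup>2) \<le> sqrt ((\<integral>x. (u x)\<^sup>2 \<partial>M) * (\<integral>x. (v x)\<^sup>2 \<partial>M))"
    by (rule real_sqrt_le_mono)
  moreover have "0 \<le> (\<integral>x. \<bar>u x * v x\<bar> \<partial>M)" by simp
  ultimately show ?thesis by (simp add: real_sqrt_mult)
qed


definition sqint :: "'a measure \<Rightarrow> ('a \<Rightarrow> real) \<Rightarrow> bool" where
  "sqint M u \<longleftrightarrow> u \<in> borel_measurable M \<and> integrable M (\<lambda>x. (u x)\<^sup>2)"

lemma sqint_meas: "sqint M u \<Longrightarrow> u \<in> borel_measurable M"
  and sqint_int: "sqint M u \<Longrightarrow> integrable M (\<lambda>x. (u x)\<^sup>2)"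
  by (auto simp: sqint_def)

lemma sqint_mult_integrable: "sqint M u \<Longrightarrow> sqint M v \<Longrightarrow> integrable M (\<lambda>x. u x * v x)"
  unfolding sqint_def by (auto intro: integrable_prod_sq1)

lemma sqint_add: assumes "sqint M u" "sqint M v" shows "sqint M (\<lambda>x. u x + v x)"
proof -
  have "integrable M (\<lambda>x. (u x)\<^sup>2 + 2 * (u x * v x) + (v x)\<^sup>2)"
    using assms sqint_mult_integrable[OF assms] by (auto simp: sqint_def)
  moreover have "(\<lambda>x. (u x + v x)\<^sup>2) = (\<lambda>x. (u x)\<^sup>2 + 2 * (u x * v x) + (v x)\<^sup>2)"
    by (simp add: power2_sum algebra_simps)
  moreover have "(\<lambda>x. u x + v x) \<in> borel_measurable M" using assms unfolding sqint_def by auto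
  ultimately show ?thesis unfolding sqint_def by simp
qed

lemma sqint_cmult: assumes "sqint M u" shows "sqint M (\<lambda>x. c * u x)"
  using assms unfolding sqint_def by (auto simp: power_mult_distrib)

lemma sqint_diff: assumes "sqint M u" "sqint M v" shows "sqint M (\<lambda>x. u x - v x)"
  using sqint_add[OF assms(1) sqint_cmult[OF assms(2), of "-1"]] by simp

lemma sqint_le: assumes "sqint M u" "v \<in> borel_measurable M" "\<And>x. \<bar>v x\<bar> \<le> \<bar>u x\<bar>"
  shows "sqint M v"
  unfolding sqint_def
proof
  show "v \<in> borel_measurable M" by fact
  show "integrable M (\<lambda>x. (v x)\<^sup>2)"
  proof (rule Bochner_Integration.integrable_bound[OF sqint_int[OF assms(1)]])
    show "(\<lambda>x. (v x)\<^sup>2) \<in> borel_measurable M" using assms(2) by measurable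
    show "AE x in M. norm ((v x)\<^sup>2) \<le> norm ((u x)\<^sup>2)"
      using assms(3) by (auto intro!: AE_I2 simp: abs_le_square_iff)
  qed
qed

lemma sqint_bounded_mult: assumes "sqint M u" "w \<in> borel_measurable M" "\<And>x. \<bar>w x\<bar> \<le> B"
  shows "sqint M (\<lambda>x. w x * u x)"
proof (rule sqint_le[OF sqint_cmult[OF assms(1), of B]])
  show "(\<lambda>x. w x * u x) \<in> borel_measurable M" using assms sqint_meas by measurable
  fix x show "\<bar>w x * u x\<bar> \<le> \<bar>B * u x\<bar>"
    using assms(3)[of x] by (simp add: abs_mult mult_right_mono)
qed

lemma sqint_const: "finite_measure M \<Longrightarrow> sqint M (\<lambda>x. c)"
  unfolding sqint_def by (simp add: finite_measure.integrable_const)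

lemma sqint_sq_bound: assumes "sqint M u" "sqint M v"
  shows "(\<integral>x. (u x + v x)\<^sup>2 \<partial>M) \<le> 2 * (\<integral>x. (u x)\<^sup>2 \<partial>M) + 2 * (\<integral>x. (v x)\<^sup>2 \<partial>M)"
proof -
  have "(\<integral>x. (u x + v x)\<^sup>2 \<partial>M) \<le> (\<integral>x. 2 * (u x)\<^sup>2 + 2 * (v x)\<^sup>2 \<partial>M)"
  proof (rule integral_mono)
    show "integrable M (\<lambda>x. (u x + v x)\<^sup>2)" using sqint_add[OF assms] by (simp add: sqint_def)
    show "integrable M (\<lambda>x. 2 * (u x)\<^sup>2 + 2 * (v x)\<^sup>2)" using assms by (simp add: sqint_def)
    fix x have "0 \<le> (u x - v x)\<^sup>2" by simp
    then show "(u x + v x)\<^sup>2 \<le> 2 * (u x)\<^sup>2 + 2 * (v x)\<^sup>2" by (simp add: power2_eq_square algebra_simps)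
  qed
  also have "\<dots> = 2 * (\<integral>x. (u x)\<^sup>2 \<partial>M) + 2 * (\<integral>x. (v x)\<^sup>2 \<partial>M)"
    using assms by (simp add: sqint_def)
  finally show ?thesis .
qed

lemma CS_sqint: "sqint M u \<Longrightarrow> sqint M v \<Longrightarrow>
   (\<integral>x. \<bar>u x * v x\<bar> \<partial>M) \<le> sqrt (\<integral>x. (u x)\<^sup>2 \<partial>M) * sqrt (\<integral>x. (v x)\<^sup>2 \<partial>M)"
  unfolding sqint_def by (auto intro: CS_integral)

lemma eventually_at_within_I: "(\<And>x. x \<in> S \<Longrightarrow> x \<noteq> a \<Longrightarrow> P x) \<Longrightarrow> eventually P (at a within S)"
  unfolding eventually_at_filter by (auto intro!: always_eventually)


lemma abs_integral_le: fixes f :: "'a \<Rightarrow> real"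
  assumes "integrable M f" shows "\<bar>\<integral>x. f x \<partial>M\<bar> \<le> (\<integral>x. \<bar>f x\<bar> \<partial>M)"
proof -
  have "(\<integral>x. f x \<partial>M) \<le> (\<integral>x. \<bar>f x\<bar> \<partial>M)"
    using assms by (intro integral_mono) auto
  moreover have "(\<integral>x. - f x \<partial>M) \<le> (\<integral>x. \<bar>f x\<bar> \<partial>M)"
    using assms by (intro integral_mono) auto
  ultimately show ?thesis by simp
qed

lemma dqm_moment_deriv:
  fixes M :: "'x measure" and q :: "(real,'d::finite) vec \<Rightarrow> 'x \<Rightarrow> real"
    and g :: "'x \<Rightarrow> real" and D :: "'x \<Rightarrow> (real,'d) vec"
  assumes dq: "dqm (\<lambda>\<theta> x. sqrt (q \<theta> x)) M \<Theta> \<theta>0 D"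
    and \<Theta>o: "open \<Theta>" and \<theta>0: "\<theta>0 \<in> \<Theta>"
    and qnn: "\<And>\<theta> x. \<theta> \<in> \<Theta> \<Longrightarrow> 0 \<le> q \<theta> x"
    and gm[measurable]: "g \<in> borel_measurable M"
    and mom: "\<And>\<theta>. \<theta> \<in> \<Theta> \<Longrightarrow> integrable M (\<lambda>x. (g x)\<^sup>2 * q \<theta> x)"
    and momC: "\<And>\<theta>. \<theta> \<in> \<Theta> \<Longrightarrow> (\<integral>x. (g x)\<^sup>2 * q \<theta> x \<partial>M) \<le> C"
  shows "((\<lambda>\<theta>. \<integral>x. g x * q \<theta> x \<partial>M) has_derivative
           (\<lambda>h. h \<bullet> (\<integral>x. (2 * g x * sqrt (q \<theta>0 x)) *\<^sub>R D x \<partial>M))) (at \<theta>0)"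
proof -
  define s where "s \<theta> x = sqrt (q \<theta> x)" for \<theta> x
  from dq have s_sq: "\<And>\<theta>. \<theta>\<in>\<Theta> \<Longrightarrow> sqint M (s \<theta>)" and Dm[measurable]: "D \<in> borel_measurable M"
    and Di: "\<And>i. integrable M (\<lambda>x. (D x $ i)\<^sup>2)"
    and lim: "((\<lambda>\<theta>. sqrt (\<integral>x. (s \<theta> x - s \<theta>0 x - (\<theta> - \<theta>0) \<bullet> D x)\<^sup>2 \<partial>M) / norm (\<theta> - \<theta>0))
        \<longlongrightarrow> 0) (at \<theta>0 within \<Theta>)"
    unfolding dqm_def sqint_def s_def by auto
  have sm: "\<And>\<theta>. \<theta>\<in>\<Theta> \<Longrightarrow> s \<theta> \<in> borel_measurable M" using s_sq by (simp add: sqint_def)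
  have s0m[measurable]: "s \<theta>0 \<in> borel_measurable M" using sm \<theta>0 by simp
  have sq: "\<And>\<theta> x. \<theta>\<in>\<Theta> \<Longrightarrow> (s \<theta> x)\<^sup>2 = q \<theta> x" using qnn by (simp add: s_def)
  have gs: "\<And>\<theta>. \<theta>\<in>\<Theta> \<Longrightarrow> sqint M (\<lambda>x. g x * s \<theta> x)"
  proof -
    fix \<theta> assume th: "\<theta> \<in> \<Theta>"
    have "(\<lambda>x. (g x * s \<theta> x)\<^sup>2) = (\<lambda>x. (g x)\<^sup>2 * q \<theta> x)"
      using sq[OF th] by (simp add: power_mult_distrib)
    then show "sqint M (\<lambda>x. g x * s \<theta> x)"
      unfolding sqint_def using mom[OF th] sm[OF th] by auto
  qed
  have gsC: "\<And>\<theta>. \<theta>\<in>\<Theta> \<Longrightarrow> (\<integral>x. (g x * s \<theta> x)\<^sup>2 \<partial>M) \<le> C"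
  proof -
    fix \<theta> assume th: "\<theta> \<in> \<Theta>"
    have "(\<lambda>x. (g x * s \<theta> x)\<^sup>2) = (\<lambda>x. (g x)\<^sup>2 * q \<theta> x)"
      using sq[OF th] by (simp add: power_mult_distrib)
    then show "(\<integral>x. (g x * s \<theta> x)\<^sup>2 \<partial>M) \<le> C" using momC[OF th] by simp
  qed
  have C0: "0 \<le> C"
  proof -
    have "0 \<le> (\<integral>x. (g x * s \<theta>0 x)\<^sup>2 \<partial>M)" by simp
    then show ?thesis using gsC[OF \<theta>0] by linarith
  qed
  define N where "N x = norm (D x)" for x
  have N: "sqint M N"
  proof -
    have "(\<lambda>x. (N x)\<^sup>2) = (\<lambda>x. \<Sum>i\<in>UNIV. (D x $ i)\<^sup>2)"
      unfolding N_def power2_norm_eq_inner inner_vec_def by (simp add: power2_eq_square)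
    moreover have "integrable M (\<lambda>x. \<Sum>i\<in>UNIV. (D x $ i)\<^sup>2)" using Di by auto
    moreover have "N \<in> borel_measurable M" unfolding N_def by measurable
    ultimately show ?thesis unfolding sqint_def by simp
  qed
  have Nm[measurable]: "N \<in> borel_measurable M" using N by (simp add: sqint_def)
  define L where "L \<theta> x = (\<theta> - \<theta>0) \<bullet> D x" for \<theta> x
  have Lb: "\<And>\<theta> x. \<bar>L \<theta> x\<bar> \<le> norm (\<theta> - \<theta>0) * N x"
    unfolding L_def N_def by (rule Cauchy_Schwarz_ineq2)
  have Lm[measurable]: "\<And>\<theta>. L \<theta> \<in> borel_measurable M" unfolding L_def by measurable
  have L: "\<And>\<theta>. sqint M (L \<theta>)"
  proof -
    fix \<theta>
    show "sqint M (L \<theta>)"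
    proof (rule sqint_le[OF sqint_cmult[OF N, of "norm (\<theta> - \<theta>0)"]])
      fix x show "\<bar>L \<theta> x\<bar> \<le> \<bar>norm (\<theta> - \<theta>0) * N x\<bar>" using Lb[of \<theta> x] by simp
    qed simp
  qed
  define r where "r \<theta> x = s \<theta> x - s \<theta>0 x - L \<theta> x" for \<theta> x
  have r: "\<And>\<theta>. \<theta>\<in>\<Theta> \<Longrightarrow> sqint M (r \<theta>)"
    unfolding r_def by (intro sqint_diff s_sq L \<theta>0)
  define R where "R \<theta> = sqrt (\<integral>x. (r \<theta> x)\<^sup>2 \<partial>M)" for \<theta>
  have limR: "((\<lambda>\<theta>. R \<theta> / norm (\<theta> - \<theta>0)) \<longlongrightarrow> 0) (at \<theta>0 within \<Theta>)"
    using lim unfolding R_def r_def L_def .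
  have normlim: "((\<lambda>\<theta>. norm (\<theta> - \<theta>0)) \<longlongrightarrow> 0) (at \<theta>0 within \<Theta>)"
    by (intro tendsto_norm_zero LIM_zero tendsto_ident_at)
  have R0: "(R \<longlongrightarrow> 0) (at \<theta>0 within \<Theta>)"
  proof -
    have "((\<lambda>\<theta>. R \<theta> / norm (\<theta> - \<theta>0) * norm (\<theta> - \<theta>0)) \<longlongrightarrow> 0 * 0) (at \<theta>0 within \<Theta>)"
      by (intro tendsto_mult limR normlim)
    then have "((\<lambda>\<theta>. R \<theta> / norm (\<theta> - \<theta>0) * norm (\<theta> - \<theta>0)) \<longlongrightarrow> 0) (at \<theta>0 within \<Theta>)"
      by simp
    then show ?thesis
      by (rule Lim_transform_eventually) (rule eventually_at_within_I, simp)
  qed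
  define Sd where "Sd \<theta> = sqrt (\<integral>x. (s \<theta> x - s \<theta>0 x)\<^sup>2 \<partial>M)" for \<theta>
  have Sdb: "\<And>\<theta>. \<theta>\<in>\<Theta> \<Longrightarrow> Sd \<theta> \<le> sqrt (2 * (norm (\<theta> - \<theta>0))\<^sup>2 * (\<integral>x. (N x)\<^sup>2 \<partial>M) + 2 * (R \<theta>)\<^sup>2)"
  proof -
    fix \<theta> assume th: "\<theta> \<in> \<Theta>"
    have "(\<integral>x. (s \<theta> x - s \<theta>0 x)\<^sup>2 \<partial>M) = (\<integral>x. (L \<theta> x + r \<theta> x)\<^sup>2 \<partial>M)"
      by (simp add: r_def)
    also have "\<dots> \<le> 2 * (\<integral>x. (L \<theta> x)\<^sup>2 \<partial>M) + 2 * (\<integral>x. (r \<theta> x)\<^sup>2 \<partial>M)"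
      by (rule sqint_sq_bound[OF L r[OF th]])
    also have "(\<integral>x. (L \<theta> x)\<^sup>2 \<partial>M) \<le> (\<integral>x. (norm (\<theta> - \<theta>0))\<^sup>2 * (N x)\<^sup>2 \<partial>M)"
    proof (rule integral_mono)
      show "integrable M (\<lambda>x. (L \<theta> x)\<^sup>2)" using L by (simp add: sqint_def)
      show "integrable M (\<lambda>x. (norm (\<theta> - \<theta>0))\<^sup>2 * (N x)\<^sup>2)" using N by (simp add: sqint_def)
      fix x show "(L \<theta> x)\<^sup>2 \<le> (norm (\<theta> - \<theta>0))\<^sup>2 * (N x)\<^sup>2"
        using Lb[of \<theta> x] by (metis abs_ge_zero abs_le_square_iff abs_of_nonneg mult_nonneg_nonneg
             norm_ge_zero N_def power_mult_distrib order_trans)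
    qed
    also have "(\<integral>x. (norm (\<theta> - \<theta>0))\<^sup>2 * (N x)\<^sup>2 \<partial>M) = (norm (\<theta> - \<theta>0))\<^sup>2 * (\<integral>x. (N x)\<^sup>2 \<partial>M)"
      by simp
    also have "(\<integral>x. (r \<theta> x)\<^sup>2 \<partial>M) = (R \<theta>)\<^sup>2" unfolding R_def by simp
    finally show "Sd \<theta> \<le> sqrt (2 * (norm (\<theta> - \<theta>0))\<^sup>2 * (\<integral>x. (N x)\<^sup>2 \<partial>M) + 2 * (R \<theta>)\<^sup>2)"
      unfolding Sd_def by (simp add: mult.assoc)
  qed
  have Sd0: "(Sd \<longlongrightarrow> 0) (at \<theta>0 within \<Theta>)"
  proof (rule tendsto_sandwich[of "\<lambda>_. 0"])
    show "\<forall>\<^sub>F \<theta> in at \<theta>0 within \<Theta>. 0 \<le> Sd \<theta>" by (auto simp: Sd_def)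
    show "\<forall>\<^sub>F \<theta> in at \<theta>0 within \<Theta>. Sd \<theta> \<le> sqrt (2 * (norm (\<theta> - \<theta>0))\<^sup>2 * (\<integral>x. (N x)\<^sup>2 \<partial>M) + 2 * (R \<theta>)\<^sup>2)"
      by (auto intro!: eventually_at_within_I Sdb)
    have "((\<lambda>\<theta>. sqrt (2 * (norm (\<theta> - \<theta>0))\<^sup>2 * (\<integral>x. (N x)\<^sup>2 \<partial>M) + 2 * (R \<theta>)\<^sup>2)) \<longlongrightarrow>
        sqrt (2 * 0\<^sup>2 * (\<integral>x. (N x)\<^sup>2 \<partial>M) + 2 * 0\<^sup>2)) (at \<theta>0 within \<Theta>)"
      by (intro tendsto_intros normlim R0)
    then show "((\<lambda>\<theta>. sqrt (2 * (norm (\<theta> - \<theta>0))\<^sup>2 * (\<integral>x. (N x)\<^sup>2 \<partial>M) + 2 * (R \<theta>)\<^sup>2)) \<longlongrightarrow> 0) (at \<theta>0 within \<Theta>)"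
      by simp
  qed simp
  define tn where "tn n x = (if real n < \<bar>g x\<bar> then N x else 0)" for n :: nat and x
  have tnm[measurable]: "\<And>n. tn n \<in> borel_measurable M" unfolding tn_def by measurable
  have tn: "\<And>n. sqint M (tn n)"
    by (rule sqint_le[OF N]) (auto simp: tn_def)
  define tail where "tail n = (\<integral>x. (tn n x)\<^sup>2 \<partial>M)" for n
  have tail0: "tail \<longlonglongrightarrow> 0"
  proof -
    have "(\<lambda>n. \<integral>x. (tn n x)\<^sup>2 \<partial>M) \<longlonglongrightarrow> (\<integral>x. 0 \<partial>M)"
    proof (rule integral_dominated_convergence[where w = "\<lambda>x. (N x)\<^sup>2"])
      show "integrable M (\<lambda>x. (N x)\<^sup>2)" using N by (simp add: sqint_def)
      show "AE x in M. (\<lambda>n. (tn n x)\<^sup>2) \<longlonglongrightarrow> 0"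
      proof (rule AE_I2)
        fix x
        have "eventually (\<lambda>n. (tn n x)\<^sup>2 = 0) sequentially"
          unfolding eventually_sequentially
        proof (intro exI allI impI)
          fix n assume "nat \<lceil>\<bar>g x\<bar>\<rceil> \<le> n"
          then have "\<bar>g x\<bar> \<le> real n" by linarith
          then show "(tn n x)\<^sup>2 = 0" by (simp add: tn_def)
        qed
        then show "(\<lambda>n. (tn n x)\<^sup>2) \<longlonglongrightarrow> 0" by (rule tendsto_eventually)
      qed
      fix n show "AE x in M. norm ((tn n x)\<^sup>2) \<le> (N x)\<^sup>2"
        by (auto simp: tn_def)
    qed auto
    then show ?thesis unfolding tail_def by simp
  qed
  define T where "T \<theta> = (\<integral>x. \<bar>N x * (g x * (s \<theta> x - s \<theta>0 x))\<bar> \<partial>M)" for \<theta>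
  have gds: "\<And>\<theta>. \<theta>\<in>\<Theta> \<Longrightarrow> sqint M (\<lambda>x. g x * (s \<theta> x - s \<theta>0 x))"
  proof -
    fix \<theta> assume th: "\<theta>\<in>\<Theta>"
    have "sqint M (\<lambda>x. g x * s \<theta> x - g x * s \<theta>0 x)" by (intro sqint_diff gs th \<theta>0)
    then show "sqint M (\<lambda>x. g x * (s \<theta> x - s \<theta>0 x))" by (simp add: right_diff_distrib)
  qed
  have gdsC: "\<And>\<theta>. \<theta>\<in>\<Theta> \<Longrightarrow> sqrt (\<integral>x. (g x * (s \<theta> x - s \<theta>0 x))\<^sup>2 \<partial>M) \<le> 2 * sqrt C"
  proof -
    fix \<theta> assume th: "\<theta>\<in>\<Theta>"
    have "(\<integral>x. (g x * (s \<theta> x - s \<theta>0 x))\<^sup>2 \<partial>M) = (\<integral>x. (g x * s \<theta> x + (-1) * (g x * s \<theta>0 x))\<^sup>2 \<partial>M)"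
      by (simp add: algebra_simps)
    also have "\<dots> \<le> 2 * (\<integral>x. (g x * s \<theta> x)\<^sup>2 \<partial>M) + 2 * (\<integral>x. ((-1) * (g x * s \<theta>0 x))\<^sup>2 \<partial>M)"
      by (intro sqint_sq_bound sqint_cmult gs th \<theta>0)
    also have "\<dots> \<le> 2 * C + 2 * C" using gsC[OF th] gsC[OF \<theta>0] by simp
    finally have "sqrt (\<integral>x. (g x * (s \<theta> x - s \<theta>0 x))\<^sup>2 \<partial>M) \<le> sqrt (2\<^sup>2 * C)"
      by (intro real_sqrt_le_mono) simp
    then show "sqrt (\<integral>x. (g x * (s \<theta> x - s \<theta>0 x))\<^sup>2 \<partial>M) \<le> 2 * sqrt C"
      by (simp add: real_sqrt_mult)
  qed
  have Tb: "\<And>\<theta> n. \<theta>\<in>\<Theta> \<Longrightarrow> T \<theta> \<le> real n * (sqrt (\<integral>x. (N x)\<^sup>2 \<partial>M) * Sd \<theta>) + sqrt (tail n) * (2 * sqrt C)"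
  proof -
    fix \<theta> n assume th: "\<theta>\<in>\<Theta>"
    have ds: "sqint M (\<lambda>x. s \<theta> x - s \<theta>0 x)" by (intro sqint_diff s_sq th \<theta>0)
    have i1: "integrable M (\<lambda>x. \<bar>N x * (s \<theta> x - s \<theta>0 x)\<bar>)"
      by (intro integrable_abs sqint_mult_integrable N ds)
    have i2: "integrable M (\<lambda>x. \<bar>tn n x * (g x * (s \<theta> x - s \<theta>0 x))\<bar>)"
      by (intro integrable_abs sqint_mult_integrable tn gds th)
    have "T \<theta> \<le> (\<integral>x. real n * \<bar>N x * (s \<theta> x - s \<theta>0 x)\<bar> + \<bar>tn n x * (g x * (s \<theta> x - s \<theta>0 x))\<bar> \<partial>M)"
      unfolding T_def
    proof (rule integral_mono)
      show "integrable M (\<lambda>x. \<bar>N x * (g x * (s \<theta> x - s \<theta>0 x))\<bar>)"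
        by (intro integrable_abs sqint_mult_integrable N gds th)
      show "integrable M (\<lambda>x. real n * \<bar>N x * (s \<theta> x - s \<theta>0 x)\<bar> + \<bar>tn n x * (g x * (s \<theta> x - s \<theta>0 x))\<bar>)"
        using i1 i2 by auto
      fix x
      show "\<bar>N x * (g x * (s \<theta> x - s \<theta>0 x))\<bar> \<le> real n * \<bar>N x * (s \<theta> x - s \<theta>0 x)\<bar> + \<bar>tn n x * (g x * (s \<theta> x - s \<theta>0 x))\<bar>"
      proof (cases "real n < \<bar>g x\<bar>")
        case True then show ?thesis by (simp add: tn_def)
      next
        case False
        then have "\<bar>N x * (g x * (s \<theta> x - s \<theta>0 x))\<bar> \<le> real n * \<bar>N x * (s \<theta> x - s \<theta>0 x)\<bar>"
        proof -
          have "\<bar>g x\<bar> * (\<bar>N x\<bar> * \<bar>s \<theta> x - s \<theta>0 x\<bar>) \<le> real n * (\<bar>N x\<bar> * \<bar>s \<theta> x - s \<theta>0 x\<bar>)"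
            using False by (intro mult_right_mono) auto
          then show ?thesis by (simp add: abs_mult mult.left_commute)
        qed
        then show ?thesis by simp
      qed
    qed
    also have "\<dots> = real n * (\<integral>x. \<bar>N x * (s \<theta> x - s \<theta>0 x)\<bar> \<partial>M) + (\<integral>x. \<bar>tn n x * (g x * (s \<theta> x - s \<theta>0 x))\<bar> \<partial>M)"
      using i1 i2 by simp
    also have "(\<integral>x. \<bar>N x * (s \<theta> x - s \<theta>0 x)\<bar> \<partial>M) \<le> sqrt (\<integral>x. (N x)\<^sup>2 \<partial>M) * Sd \<theta>"
      unfolding Sd_def by (rule CS_sqint[OF N ds])
    also have "(\<integral>x. \<bar>tn n x * (g x * (s \<theta> x - s \<theta>0 x))\<bar> \<partial>M) \<le> sqrt (tail n) * sqrt (\<integral>x. (g x * (s \<theta> x - s \<theta>0 x))\<^sup>2 \<partial>M)"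
      unfolding tail_def by (rule CS_sqint[OF tn gds[OF th]])
    also have "\<dots> \<le> sqrt (tail n) * (2 * sqrt C)"
      by (intro mult_left_mono gdsC th) (simp add: tail_def)
    finally show "T \<theta> \<le> real n * (sqrt (\<integral>x. (N x)\<^sup>2 \<partial>M) * Sd \<theta>) + sqrt (tail n) * (2 * sqrt C)"
      by (simp add: mult_left_mono)
  qed
  have T0: "(T \<longlongrightarrow> 0) (at \<theta>0 within \<Theta>)"
  proof (rule order_tendstoI)
    fix a :: real assume "a < 0"
    then show "eventually (\<lambda>\<theta>. a < T \<theta>) (at \<theta>0 within \<Theta>)"
    proof (intro always_eventually allI)
      fix \<theta> have "0 \<le> T \<theta>" unfolding T_def by simp
      then show "a < T \<theta>" using \<open>a < 0\<close> by linarith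
    qed
  next
    fix e :: real assume e: "0 < e"
    have "(\<lambda>n. sqrt (tail n) * (2 * sqrt C)) \<longlonglongrightarrow> sqrt 0 * (2 * sqrt C)"
      by (intro tendsto_intros tail0)
    then have "eventually (\<lambda>n. sqrt (tail n) * (2 * sqrt C) < e / 2) sequentially"
      using e by (intro order_tendstoD(2)) auto
    then obtain n where n: "sqrt (tail n) * (2 * sqrt C) < e / 2"
      using eventually_sequentially by auto
    have "((\<lambda>\<theta>. real n * (sqrt (\<integral>x. (N x)\<^sup>2 \<partial>M) * Sd \<theta>)) \<longlongrightarrow> real n * (sqrt (\<integral>x. (N x)\<^sup>2 \<partial>M) * 0)) (at \<theta>0 within \<Theta>)"
      by (intro tendsto_intros Sd0)
    then have "eventually (\<lambda>\<theta>. real n * (sqrt (\<integral>x. (N x)\<^sup>2 \<partial>M) * Sd \<theta>) < e / 2) (at \<theta>0 within \<Theta>)"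
      using e by (intro order_tendstoD(2)) auto
    moreover have "eventually (\<lambda>\<theta>. \<theta> \<in> \<Theta>) (at \<theta>0 within \<Theta>)"
      by (rule eventually_at_within_I)
    ultimately show "eventually (\<lambda>\<theta>. T \<theta> < e) (at \<theta>0 within \<Theta>)"
    proof eventually_elim
      case (elim \<theta>)
      then show ?case using Tb[of \<theta> n] n by linarith
    qed
  qed
  have gpsC: "\<And>\<theta>. \<theta>\<in>\<Theta> \<Longrightarrow> sqrt (\<integral>x. (g x * (s \<theta> x + s \<theta>0 x))\<^sup>2 \<partial>M) \<le> 2 * sqrt C"
  proof -
    fix \<theta> assume th: "\<theta>\<in>\<Theta>"
    have "(\<integral>x. (g x * (s \<theta> x + s \<theta>0 x))\<^sup>2 \<partial>M) = (\<integral>x. (g x * s \<theta> x + (g x * s \<theta>0 x))\<^sup>2 \<partial>M)"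
      by (simp add: algebra_simps)
    also have "\<dots> \<le> 2 * (\<integral>x. (g x * s \<theta> x)\<^sup>2 \<partial>M) + 2 * (\<integral>x. (g x * s \<theta>0 x)\<^sup>2 \<partial>M)"
      by (intro sqint_sq_bound gs th \<theta>0)
    also have "\<dots> \<le> 2 * C + 2 * C" using gsC[OF th] gsC[OF \<theta>0] by simp
    finally have "sqrt (\<integral>x. (g x * (s \<theta> x + s \<theta>0 x))\<^sup>2 \<partial>M) \<le> sqrt (2\<^sup>2 * C)"
      by (intro real_sqrt_le_mono) simp
    then show "sqrt (\<integral>x. (g x * (s \<theta> x + s \<theta>0 x))\<^sup>2 \<partial>M) \<le> 2 * sqrt C"
      by (simp add: real_sqrt_mult)
  qed
  have gps: "\<And>\<theta>. \<theta>\<in>\<Theta> \<Longrightarrow> sqint M (\<lambda>x. g x * (s \<theta> x + s \<theta>0 x))"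
  proof -
    fix \<theta> assume th: "\<theta>\<in>\<Theta>"
    have "sqint M (\<lambda>x. g x * s \<theta> x + g x * s \<theta>0 x)" by (intro sqint_add gs th \<theta>0)
    then show "sqint M (\<lambda>x. g x * (s \<theta> x + s \<theta>0 x))" by (simp add: distrib_left)
  qed
  define V where "V = (\<integral>x. (2 * g x * sqrt (q \<theta>0 x)) *\<^sub>R D x \<partial>M)"
  have Vint: "integrable M (\<lambda>x. (2 * g x * sqrt (q \<theta>0 x)) *\<^sub>R D x)"
  proof (rule Bochner_Integration.integrable_bound)
    show "integrable M (\<lambda>x. 2 * (g x * s \<theta>0 x) * N x)"
      by (intro sqint_mult_integrable sqint_cmult gs \<theta>0 N)
    show "(\<lambda>x. (2 * g x * sqrt (q \<theta>0 x)) *\<^sub>R D x) \<in> borel_measurable M"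
      using s0m unfolding s_def by measurable
    show "AE x in M. norm ((2 * g x * sqrt (q \<theta>0 x)) *\<^sub>R D x) \<le> norm (2 * (g x * s \<theta>0 x) * N x)"
      by (intro AE_I2) (simp add: s_def N_def abs_mult)
  qed
  have hV: "\<And>\<theta>. (\<theta> - \<theta>0) \<bullet> V = (\<integral>x. 2 * (g x * s \<theta>0 x) * L \<theta> x \<partial>M)"
  proof -
    fix \<theta>
    have "(\<theta> - \<theta>0) \<bullet> V = (\<integral>x. (\<theta> - \<theta>0) \<bullet> ((2 * g x * sqrt (q \<theta>0 x)) *\<^sub>R D x) \<partial>M)"
      unfolding V_def by (rule integral_inner_right[symmetric]) (use Vint in simp)
    also have "\<dots> = (\<integral>x. 2 * (g x * s \<theta>0 x) * L \<theta> x \<partial>M)"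
      by (simp add: s_def L_def mult.assoc)
    finally show "(\<theta> - \<theta>0) \<bullet> V = (\<integral>x. 2 * (g x * s \<theta>0 x) * L \<theta> x \<partial>M)" .
  qed
  define F where "F \<theta> = (\<integral>x. g x * q \<theta> x \<partial>M)" for \<theta>
  have Fq: "\<And>\<theta>. \<theta>\<in>\<Theta> \<Longrightarrow> F \<theta> = (\<integral>x. (g x * s \<theta> x) * s \<theta> x \<partial>M)"
    unfolding F_def using sq by (simp add: mult.assoc power2_eq_square)
  have E: "\<And>\<theta>. \<theta>\<in>\<Theta> \<Longrightarrow> F \<theta> - (F \<theta>0 + (\<theta> - \<theta>0) \<bullet> V) =
      (\<integral>x. L \<theta> x * (g x * (s \<theta> x - s \<theta>0 x)) + r \<theta> x * (g x * (s \<theta> x + s \<theta>0 x)) \<partial>M)"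
  proof -
    fix \<theta> assume th: "\<theta>\<in>\<Theta>"
    have i1: "integrable M (\<lambda>x. (g x * s \<theta> x) * s \<theta> x)"
      by (intro sqint_mult_integrable gs s_sq th)
    have i2: "integrable M (\<lambda>x. (g x * s \<theta>0 x) * s \<theta>0 x)"
      by (intro sqint_mult_integrable gs s_sq \<theta>0)
    have i3: "integrable M (\<lambda>x. 2 * (g x * s \<theta>0 x) * L \<theta> x)"
      by (intro sqint_mult_integrable sqint_cmult gs L \<theta>0)
    have "F \<theta> - (F \<theta>0 + (\<theta> - \<theta>0) \<bullet> V) =
        (\<integral>x. (g x * s \<theta> x) * s \<theta> x - ((g x * s \<theta>0 x) * s \<theta>0 x + 2 * (g x * s \<theta>0 x) * L \<theta> x) \<partial>M)"
      unfolding Fq[OF th] Fq[OF \<theta>0] hV using i1 i2 i3 by simp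
    also have "\<dots> = (\<integral>x. L \<theta> x * (g x * (s \<theta> x - s \<theta>0 x)) + r \<theta> x * (g x * (s \<theta> x + s \<theta>0 x)) \<partial>M)"
      by (rule Bochner_Integration.integral_cong) (auto simp: r_def algebra_simps)
    finally show "F \<theta> - (F \<theta>0 + (\<theta> - \<theta>0) \<bullet> V) =
      (\<integral>x. L \<theta> x * (g x * (s \<theta> x - s \<theta>0 x)) + r \<theta> x * (g x * (s \<theta> x + s \<theta>0 x)) \<partial>M)" .
  qed
  have Eb: "\<And>\<theta>. \<theta>\<in>\<Theta> \<Longrightarrow> \<bar>F \<theta> - (F \<theta>0 + (\<theta> - \<theta>0) \<bullet> V)\<bar> \<le> norm (\<theta> - \<theta>0) * T \<theta> + R \<theta> * (2 * sqrt C)"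
  proof -
    fix \<theta> assume th: "\<theta>\<in>\<Theta>"
    have ia: "integrable M (\<lambda>x. L \<theta> x * (g x * (s \<theta> x - s \<theta>0 x)))"
      by (intro sqint_mult_integrable L gds th)
    have ib: "integrable M (\<lambda>x. r \<theta> x * (g x * (s \<theta> x + s \<theta>0 x)))"
      by (intro sqint_mult_integrable r gps th)
    have "\<bar>F \<theta> - (F \<theta>0 + (\<theta> - \<theta>0) \<bullet> V)\<bar> \<le> (\<integral>x. \<bar>L \<theta> x * (g x * (s \<theta> x - s \<theta>0 x)) + r \<theta> x * (g x * (s \<theta> x + s \<theta>0 x))\<bar> \<partial>M)"
      unfolding E[OF th] using ia ib by (intro abs_integral_le) auto
    also have "\<dots> \<le> (\<integral>x. \<bar>L \<theta> x * (g x * (s \<theta> x - s \<theta>0 x))\<bar> + \<bar>r \<theta> x * (g x * (s \<theta> x + s \<theta>0 x))\<bar> \<partial>M)"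
      using ia ib by (intro integral_mono) auto
    also have "\<dots> = (\<integral>x. \<bar>L \<theta> x * (g x * (s \<theta> x - s \<theta>0 x))\<bar> \<partial>M) + (\<integral>x. \<bar>r \<theta> x * (g x * (s \<theta> x + s \<theta>0 x))\<bar> \<partial>M)"
      using ia ib by simp
    also have "(\<integral>x. \<bar>L \<theta> x * (g x * (s \<theta> x - s \<theta>0 x))\<bar> \<partial>M) \<le> (\<integral>x. norm (\<theta> - \<theta>0) * \<bar>N x * (g x * (s \<theta> x - s \<theta>0 x))\<bar> \<partial>M)"
    proof (rule integral_mono)
      show "integrable M (\<lambda>x. \<bar>L \<theta> x * (g x * (s \<theta> x - s \<theta>0 x))\<bar>)" using ia by auto
      show "integrable M (\<lambda>x. norm (\<theta> - \<theta>0) * \<bar>N x * (g x * (s \<theta> x - s \<theta>0 x))\<bar>)"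
        by (intro integrable_mult_right integrable_abs sqint_mult_integrable N gds th)
      fix x
      have "\<bar>L \<theta> x\<bar> * \<bar>g x * (s \<theta> x - s \<theta>0 x)\<bar> \<le> (norm (\<theta> - \<theta>0) * N x) * \<bar>g x * (s \<theta> x - s \<theta>0 x)\<bar>"
        using Lb[of \<theta> x] by (intro mult_right_mono) auto
      then show "\<bar>L \<theta> x * (g x * (s \<theta> x - s \<theta>0 x))\<bar> \<le> norm (\<theta> - \<theta>0) * \<bar>N x * (g x * (s \<theta> x - s \<theta>0 x))\<bar>"
        by (simp add: abs_mult N_def mult.assoc)
    qed
    also have "(\<integral>x. norm (\<theta> - \<theta>0) * \<bar>N x * (g x * (s \<theta> x - s \<theta>0 x))\<bar> \<partial>M) = norm (\<theta> - \<theta>0) * T \<theta>"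
      unfolding T_def by simp
    also have "(\<integral>x. \<bar>r \<theta> x * (g x * (s \<theta> x + s \<theta>0 x))\<bar> \<partial>M) \<le> R \<theta> * sqrt (\<integral>x. (g x * (s \<theta> x + s \<theta>0 x))\<^sup>2 \<partial>M)"
      unfolding R_def by (rule CS_sqint[OF r gps]) (use th in auto)
    also have "\<dots> \<le> R \<theta> * (2 * sqrt C)"
      by (intro mult_left_mono gpsC th) (simp add: R_def)
    finally show "\<bar>F \<theta> - (F \<theta>0 + (\<theta> - \<theta>0) \<bullet> V)\<bar> \<le> norm (\<theta> - \<theta>0) * T \<theta> + R \<theta> * (2 * sqrt C)"
      by simp
  qed
  have "(F has_derivative (\<lambda>h. h \<bullet> V)) (at \<theta>0 within \<Theta>)"
    unfolding has_derivative_within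
  proof
    show "bounded_linear (\<lambda>h. h \<bullet> V)" by (rule bounded_linear_inner_left)
    show "((\<lambda>\<theta>. (1 / norm (\<theta> - \<theta>0)) *\<^sub>R (F \<theta> - (F \<theta>0 + (\<theta> - \<theta>0) \<bullet> V))) \<longlongrightarrow> 0) (at \<theta>0 within \<Theta>)"
    proof (rule Lim_null_comparison)
      show "eventually (\<lambda>\<theta>. norm ((1 / norm (\<theta> - \<theta>0)) *\<^sub>R (F \<theta> - (F \<theta>0 + (\<theta> - \<theta>0) \<bullet> V)))
          \<le> T \<theta> + R \<theta> / norm (\<theta> - \<theta>0) * (2 * sqrt C)) (at \<theta>0 within \<Theta>)"
      proof (rule eventually_at_within_I)
        fix \<theta> assume th: "\<theta> \<in> \<Theta>" and ne: "\<theta> \<noteq> \<theta>0"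
        then have np: "0 < norm (\<theta> - \<theta>0)" by simp
        have "norm ((1 / norm (\<theta> - \<theta>0)) *\<^sub>R (F \<theta> - (F \<theta>0 + (\<theta> - \<theta>0) \<bullet> V)))
            = \<bar>F \<theta> - (F \<theta>0 + (\<theta> - \<theta>0) \<bullet> V)\<bar> / norm (\<theta> - \<theta>0)" by simp
        also have "\<dots> \<le> (norm (\<theta> - \<theta>0) * T \<theta> + R \<theta> * (2 * sqrt C)) / norm (\<theta> - \<theta>0)"
          using Eb[OF th] np by (intro divide_right_mono) auto
        also have "\<dots> = T \<theta> + R \<theta> / norm (\<theta> - \<theta>0) * (2 * sqrt C)"
          using np by (simp add: field_simps)
        finally show "norm ((1 / norm (\<theta> - \<theta>0)) *\<^sub>R (F \<theta> - (F \<theta>0 + (\<theta> - \<theta>0) \<bullet> V)))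
          \<le> T \<theta> + R \<theta> / norm (\<theta> - \<theta>0) * (2 * sqrt C)" .
      qed
      have "((\<lambda>\<theta>. T \<theta> + R \<theta> / norm (\<theta> - \<theta>0) * (2 * sqrt C)) \<longlongrightarrow> 0 + 0 * (2 * sqrt C)) (at \<theta>0 within \<Theta>)"
        by (intro tendsto_intros T0 limR)
      then show "((\<lambda>\<theta>. T \<theta> + R \<theta> / norm (\<theta> - \<theta>0) * (2 * sqrt C)) \<longlongrightarrow> 0) (at \<theta>0 within \<Theta>)" by simp
    qed
  qed
  then show ?thesis
    unfolding at_within_open[OF \<theta>0 \<Theta>o] F_def V_def .
qed


definition wsq :: "'a measure \<Rightarrow> ('a \<Rightarrow> real) \<Rightarrow> ('a \<Rightarrow> real) \<Rightarrow> bool" where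
  "wsq M w u \<longleftrightarrow> u \<in> borel_measurable M \<and> sqint M (\<lambda>x. u x * sqrt (w x))"

lemma wsqI:
  assumes "u \<in> borel_measurable M" "w \<in> borel_measurable M" "\<And>x. 0 \<le> w x"
    "integrable M (\<lambda>x. (u x)\<^sup>2 * w x)"
  shows "wsq M w u"
proof -
  have "(\<lambda>x. (u x * sqrt (w x))\<^sup>2) = (\<lambda>x. (u x)\<^sup>2 * w x)"
    using assms(3) by (simp add: power_mult_distrib)
  then show ?thesis using assms unfolding wsq_def sqint_def by auto
qed

lemma wsq_meas: "wsq M w u \<Longrightarrow> u \<in> borel_measurable M"
  by (simp add: wsq_def)

lemma wsq_int:
  assumes "wsq M w u" "\<And>x. 0 \<le> w x" shows "integrable M (\<lambda>x. (u x)\<^sup>2 * w x)"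
proof -
  have "(\<lambda>x. (u x * sqrt (w x))\<^sup>2) = (\<lambda>x. (u x)\<^sup>2 * w x)"
    using assms(2) by (simp add: power_mult_distrib)
  then show ?thesis using assms unfolding wsq_def sqint_def by auto
qed

lemma wsq_mult_integrable:
  assumes "wsq M w u" "wsq M w v" "\<And>x. 0 \<le> w x"
  shows "integrable M (\<lambda>x. u x * v x * w x)"
proof -
  have "integrable M (\<lambda>x. (u x * sqrt (w x)) * (v x * sqrt (w x)))"
    using assms by (intro sqint_mult_integrable) (auto simp: wsq_def)
  moreover have "(\<lambda>x. (u x * sqrt (w x)) * (v x * sqrt (w x))) = (\<lambda>x. u x * v x * w x)"
    using assms(3) by (auto simp: fun_eq_iff mult_ac)
  ultimately show ?thesis by simp
qed

lemma wsq_add: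
  assumes "wsq M w u" "wsq M w v" shows "wsq M w (\<lambda>x. u x + v x)"
proof -
  have "sqint M (\<lambda>x. u x * sqrt (w x) + v x * sqrt (w x))"
    using assms by (intro sqint_add) (auto simp: wsq_def)
  then show ?thesis using assms by (auto simp: wsq_def distrib_right)
qed

lemma wsq_cmult:
  assumes "wsq M w u" shows "wsq M w (\<lambda>x. c * u x)"
proof -
  have "sqint M (\<lambda>x. c * (u x * sqrt (w x)))"
    using assms by (intro sqint_cmult) (auto simp: wsq_def)
  then show ?thesis using assms by (auto simp: wsq_def mult.assoc)
qed

lemma wsq_diff:
  assumes "wsq M w u" "wsq M w v" shows "wsq M w (\<lambda>x. u x - v x)"
  using wsq_add[OF assms(1) wsq_cmult[OF assms(2), of "-1"]] by simp

lemma wsq_bounded_mult: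
  assumes "wsq M w u" "b \<in> borel_measurable M" "\<And>x. \<bar>b x\<bar> \<le> B"
  shows "wsq M w (\<lambda>x. b x * u x)"
proof -
  have "sqint M (\<lambda>x. b x * (u x * sqrt (w x)))"
    using assms sqint_bounded_mult[of M "\<lambda>x. u x * sqrt (w x)" b B] by (auto simp: wsq_def)
  then show ?thesis using assms by (auto simp: wsq_def mult.assoc)
qed

lemma wsq_const:
  assumes "integrable M w" "\<And>x. 0 \<le> w x" shows "wsq M w (\<lambda>x. c)"
  using assms by (intro wsqI) auto

lemma wsq_cong:
  assumes "wsq M w u" "\<And>x. u x = v x" shows "wsq M w v"
proof -
  have "u = v" using assms(2) by auto
  then show ?thesis using assms(1) by simp
qed

locale arm =
  fixes Ma :: "real measure" and N :: "'z measure" and q :: "real \<times> 'z \<Rightarrow> real"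
  assumes ps: "pair_sigma_finite Ma N"
    and setsMa: "sets Ma = sets borel"
    and qnn: "\<And>x. 0 \<le> q x"
    and qi: "integrable (Ma \<Otimes>\<^sub>M N) q"
    and q2: "integrable (Ma \<Otimes>\<^sub>M N) (\<lambda>x. (fst x)\<^sup>2 * q x)"
begin

interpretation P: pair_sigma_finite Ma N by (rule ps)

lemma qm[measurable]: "q \<in> borel_measurable (Ma \<Otimes>\<^sub>M N)"
  using qi by (rule borel_measurable_integrable)

lemma idm[measurable]: "(\<lambda>y. y) \<in> borel_measurable Ma"
  by (rule measurable_ident_sets[OF setsMa])

lemma fstm[measurable]: "(\<lambda>x. fst x) \<in> borel_measurable (Ma \<Otimes>\<^sub>M N)"
  by measurable

lemma qy: "integrable (Ma \<Otimes>\<^sub>M N) (\<lambda>x. fst x * q x)"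
  using integrable_prod_sq[of "\<lambda>x. fst x" "Ma \<Otimes>\<^sub>M N" "\<lambda>_. 1" q] q2 qi qnn by simp

definition "f z = (\<integral>y. q (y, z) \<partial>Ma)"
definition "e z = (\<integral>y. y * q (y, z) \<partial>Ma)"
definition "e2 z = (\<integral>y. y\<^sup>2 * q (y, z) \<partial>Ma)"

lemma sec: "AE z in N. integrable Ma (\<lambda>y. q (y, z)) \<and> integrable Ma (\<lambda>y. y * q (y, z))
    \<and> integrable Ma (\<lambda>y. y\<^sup>2 * q (y, z))"
  using P.AE_integrable_snd[of "\<lambda>y z. q (y, z)"] P.AE_integrable_snd[of "\<lambda>y z. y * q (y, z)"]
    P.AE_integrable_snd[of "\<lambda>y z. y\<^sup>2 * q (y, z)"] qi qy q2
  by (auto simp: case_prod_beta' elim: AE_mp intro!: AE_I2)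

lemma fint: "integrable N f" "(\<integral>z. f z \<partial>N) = (\<integral>x. q x \<partial>(Ma \<Otimes>\<^sub>M N))"
  using P.integrable_snd[of "\<lambda>y z. q (y, z)"] P.integral_snd[of "\<lambda>y z. q (y, z)"] qi
  by (auto simp: f_def[abs_def] case_prod_beta')

lemma eint: "integrable N e" "(\<integral>z. e z \<partial>N) = (\<integral>x. fst x * q x \<partial>(Ma \<Otimes>\<^sub>M N))"
  using P.integrable_snd[of "\<lambda>y z. y * q (y, z)"] P.integral_snd[of "\<lambda>y z. y * q (y, z)"] qy
  by (auto simp: e_def[abs_def] case_prod_beta')

lemma e2int: "integrable N e2" "(\<integral>z. e2 z \<partial>N) = (\<integral>x. (fst x)\<^sup>2 * q x \<partial>(Ma \<Otimes>\<^sub>M N))"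
  using P.integrable_snd[of "\<lambda>y z. y\<^sup>2 * q (y, z)"] P.integral_snd[of "\<lambda>y z. y\<^sup>2 * q (y, z)"] q2
  by (auto simp: e2_def[abs_def] case_prod_beta')

lemma fm[measurable]: "f \<in> borel_measurable N" using fint(1) by (rule borel_measurable_integrable)
lemma em[measurable]: "e \<in> borel_measurable N" using eint(1) by (rule borel_measurable_integrable)

lemma cm_eq: "cond_mean Ma q z = e z / f z"
  by (simp add: cond_mean_def e_def f_def)

lemma cmm[measurable]: "cond_mean Ma q \<in> borel_measurable N"
  unfolding cm_eq[abs_def] by measurable

lemma f_nonneg: "0 \<le> f z" unfolding f_def using qnn by simp
lemma e2_nonneg: "0 \<le> e2 z" unfolding e2_def using qnn by simp

lemma e_sq: "AE z in N. (e z)\<^sup>2 \<le> f z * e2 z"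
  using sec
proof eventually_elim
  case (elim z)
  then have i0: "integrable Ma (\<lambda>y. q (y, z))" and i2: "integrable Ma (\<lambda>y. y\<^sup>2 * q (y, z))"
    and i1: "integrable Ma (\<lambda>y. y * q (y, z))" by auto
  have m0: "(\<lambda>y. q (y, z)) \<in> borel_measurable Ma" using i0 by (rule borel_measurable_integrable)
  have "(\<integral>y. \<bar>sqrt (q (y, z)) * (y * sqrt (q (y, z)))\<bar> \<partial>Ma)
     \<le> sqrt (\<integral>y. (sqrt (q (y, z)))\<^sup>2 \<partial>Ma) * sqrt (\<integral>y. (y * sqrt (q (y, z)))\<^sup>2 \<partial>Ma)"
  proof (rule CS_integral)
    show "(\<lambda>y. sqrt (q (y, z))) \<in> borel_measurable Ma" using m0 by measurable
    show "(\<lambda>y. y * sqrt (q (y, z))) \<in> borel_measurable Ma" using m0 by measurable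
    show "integrable Ma (\<lambda>y. (sqrt (q (y, z)))\<^sup>2)" using i0 qnn by simp
    show "integrable Ma (\<lambda>y. (y * sqrt (q (y, z)))\<^sup>2)" using i2 qnn by (simp add: power_mult_distrib)
  qed
  also have "(\<lambda>y. \<bar>sqrt (q (y, z)) * (y * sqrt (q (y, z)))\<bar>) = (\<lambda>y. \<bar>y * q (y, z)\<bar>)"
    using qnn by (auto simp: fun_eq_iff abs_mult)
  also have "(\<lambda>y. (sqrt (q (y, z)))\<^sup>2) = (\<lambda>y. q (y, z))" using qnn by auto
  also have "(\<lambda>y. (y * sqrt (q (y, z)))\<^sup>2) = (\<lambda>y. y\<^sup>2 * q (y, z))"
    using qnn by (auto simp: power_mult_distrib)
  finally have "(\<integral>y. \<bar>y * q (y, z)\<bar> \<partial>Ma) \<le> sqrt (f z) * sqrt (e2 z)"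
    by (simp add: f_def e2_def)
  moreover have "\<bar>e z\<bar> \<le> (\<integral>y. \<bar>y * q (y, z)\<bar> \<partial>Ma)"
    unfolding e_def using i1 by (rule abs_integral_le)
  ultimately have "\<bar>e z\<bar> \<le> sqrt (f z * e2 z)" by (simp add: real_sqrt_mult)
  then have "\<bar>e z\<bar>\<^sup>2 \<le> (sqrt (f z * e2 z))\<^sup>2" by (rule power_mono) simp
  then show ?case using f_nonneg[of z] e2_nonneg[of z] by simp
qed

lemma e_cm: "AE z in N. e z = cond_mean Ma q z * f z"
  using e_sq
proof eventually_elim
  case (elim z)
  show ?case
  proof (cases "f z = 0")
    case True then show ?thesis using elim by simp
  next
    case False then show ?thesis by (simp add: cm_eq)
  qed
qed

lemma cm_sq: "AE z in N. (cond_mean Ma q z)\<^sup>2 * f z \<le> e2 z"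
  using e_sq
proof eventually_elim
  case (elim z)
  show ?case
  proof (cases "f z = 0")
    case True then show ?thesis using e2_nonneg[of z] by (simp add: cm_eq)
  next
    case False
    then have fp: "0 < f z" using f_nonneg[of z] by simp
    have "(cond_mean Ma q z)\<^sup>2 * f z = (e z)\<^sup>2 / f z"
      using fp by (simp add: cm_eq power2_eq_square)
    also have "\<dots> \<le> e2 z" using elim fp by (simp add: divide_le_eq mult.commute)
    finally show ?thesis .
  qed
qed

lemma TZ:
  assumes phim[measurable]: "\<phi> \<in> borel_measurable N" and phinn: "\<And>z. 0 \<le> \<phi> z"
    and phii: "integrable N (\<lambda>z. \<phi> z * f z)"
  shows "integrable (Ma \<Otimes>\<^sub>M N) (\<lambda>x. \<phi> (snd x) * q x)"
  unfolding integrable_iff_bounded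
proof
  show "(\<lambda>x. \<phi> (snd x) * q x) \<in> borel_measurable (Ma \<Otimes>\<^sub>M N)" by measurable
  have "(\<integral>\<^sup>+x. ennreal (norm (\<phi> (snd x) * q x)) \<partial>(Ma \<Otimes>\<^sub>M N))
      = (\<integral>\<^sup>+z. (\<integral>\<^sup>+y. ennreal (norm (\<phi> (snd (y, z)) * q (y, z))) \<partial>Ma) \<partial>N)"
    by (rule P.nn_integral_snd[symmetric]) measurable
  also have "\<dots> = (\<integral>\<^sup>+z. ennreal (\<phi> z * f z) \<partial>N)"
  proof (rule nn_integral_cong_AE)
    show "AE z in N. (\<integral>\<^sup>+y. ennreal (norm (\<phi> (snd (y, z)) * q (y, z))) \<partial>Ma) = ennreal (\<phi> z * f z)"
      using sec
    proof eventually_elim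
      case (elim z)
      then have "integrable Ma (\<lambda>y. \<phi> z * q (y, z))" by auto
      then have "(\<integral>\<^sup>+y. ennreal (\<phi> z * q (y, z)) \<partial>Ma) = ennreal (\<integral>y. \<phi> z * q (y, z) \<partial>Ma)"
        by (rule nn_integral_eq_integral) (auto intro!: AE_I2 simp: phinn qnn)
      then show ?case using phinn[of z] qnn by (simp add: f_def abs_mult)
    qed
  qed
  also have "\<dots> = ennreal (\<integral>z. \<phi> z * f z \<partial>N)"
    by (rule nn_integral_eq_integral[OF phii]) (auto intro!: AE_I2 simp: phinn f_nonneg)
  also have "\<dots> < \<infinity>" by simp
  finally show "(\<integral>\<^sup>+x. ennreal (norm (\<phi> (snd x) * q x)) \<partial>(Ma \<Otimes>\<^sub>M N)) < \<infinity>" .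
qed

lemma cm_f_int: "integrable N (\<lambda>z. (cond_mean Ma q z)\<^sup>2 * f z)"
proof (rule Bochner_Integration.integrable_bound[OF e2int(1)])
  show "(\<lambda>z. (cond_mean Ma q z)\<^sup>2 * f z) \<in> borel_measurable N" by measurable
  show "AE z in N. norm ((cond_mean Ma q z)\<^sup>2 * f z) \<le> norm (e2 z)"
    using cm_sq by eventually_elim (simp add: f_nonneg e2_nonneg)
qed

end


declare One_nat_def [simp del]

theorem lemma5:
  fixes \<mu>0 \<mu>1 :: "real measure"
    and \<mu>Z :: "(real, 'k::finite) vec measure"
    and S :: "(real, 'k) vec \<Rightarrow> nat" and nS :: nat and \<pi> :: "nat \<Rightarrow> real"
    and Qs :: "(real \<times> real \<times> (real, 'k) vec \<Rightarrow> real) set"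
    and \<Theta> :: "(real, 'd::finite) vec set" and \<theta>0 :: "(real, 'd) vec"
    and q :: "(real, 'd) vec \<Rightarrow> nat \<Rightarrow> real \<times> (real, 'k) vec \<Rightarrow> real"
    and D :: "nat \<Rightarrow> real \<times> (real, 'k) vec \<Rightarrow> (real, 'd) vec"
  assumes sets_\<mu>0: "sets \<mu>0 = sets borel" and sets_\<mu>1: "sets \<mu>1 = sets borel"
    and sets_\<mu>Z: "sets \<mu>Z = sets borel"
    and sf: "sigma_finite_measure \<mu>0" "sigma_finite_measure \<mu>1" "sigma_finite_measure \<mu>Z"
    \<comment> \<open>the family Q: distributions of W = (Y(0), Y(1), Z) with densities
        w.r.t. mu_0 (x) mu_1 (x) mu_Z and finite second moments of Y(0), Y(1)\<close>
    and Qs: "\<And>w. w \<in> Qs \<Longrightarrow>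
        w \<in> borel_measurable (\<mu>0 \<Otimes>\<^sub>M \<mu>1 \<Otimes>\<^sub>M \<mu>Z) \<and> (\<forall>x. 0 \<le> w x) \<and>
        integrable (\<mu>0 \<Otimes>\<^sub>M \<mu>1 \<Otimes>\<^sub>M \<mu>Z) w \<and>
        (\<integral>x. w x \<partial>(\<mu>0 \<Otimes>\<^sub>M \<mu>1 \<Otimes>\<^sub>M \<mu>Z)) = 1 \<and>
        integrable (\<mu>0 \<Otimes>\<^sub>M \<mu>1 \<Otimes>\<^sub>M \<mu>Z) (\<lambda>x. (fst x)\<^sup>2 * w x) \<and>
        integrable (\<mu>0 \<Otimes>\<^sub>M \<mu>1 \<Otimes>\<^sub>M \<mu>Z) (\<lambda>x. (fst (snd x))\<^sup>2 * w x)"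
    \<comment> \<open>stratification and assignment probabilities\<close>
    and S_meas: "S \<in> measurable borel (count_space UNIV)"
    and S_range: "\<And>z. S z \<in> {1..nS}"
    and \<pi>_range: "\<And>s. s \<in> {1..nS} \<Longrightarrow> 0 < \<pi> s \<and> \<pi> s < 1"
    \<comment> \<open>parameter set\<close>
    and \<Theta>: "open \<Theta>" "bounded \<Theta>" "\<theta>0 \<in> \<Theta>"
    \<comment> \<open>P_theta is in the model: q(theta) are the nu_a-densities of (Y(a), Z) under some Q in Qs\<close>
    and in_model: "\<And>\<theta>. \<theta> \<in> \<Theta> \<Longrightarrow> \<exists>w\<in>Qs.
        (AE x in nuA \<mu>0 \<mu>1 \<mu>Z 1. q \<theta> 1 x = (\<integral>y0. w (y0, fst x, snd x) \<partial>\<mu>0)) \<and>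
        (AE x in nuA \<mu>0 \<mu>1 \<mu>Z 0. q \<theta> 0 x = (\<integral>y1. w (fst x, y1, snd x) \<partial>\<mu>1))"
    and dens: "\<And>\<theta> a. \<theta> \<in> \<Theta> \<Longrightarrow> a \<in> {0,1} \<Longrightarrow>
        q \<theta> a \<in> borel_measurable (nuA \<mu>0 \<mu>1 \<mu>Z a) \<and> (\<forall>x. 0 \<le> q \<theta> a x) \<and>
        integrable (nuA \<mu>0 \<mu>1 \<mu>Z a) (q \<theta> a) \<and> (\<integral>x. q \<theta> a x \<partial>(nuA \<mu>0 \<mu>1 \<mu>Z a)) = 1"
    \<comment> \<open>q_0(.;theta) and q_1(.;theta) share a common Z-marginal\<close>
    and common_marginal: "\<And>\<theta>. \<theta> \<in> \<Theta> \<Longrightarrow>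
        AE z in \<mu>Z. (\<integral>y. q \<theta> 1 (y, z) \<partial>\<mu>1) = (\<integral>y. q \<theta> 0 (y, z) \<partial>\<mu>0)"
    \<comment> \<open>P_0 = P_theta0 for a unique theta0\<close>
    and unique: "\<And>\<theta>. \<theta> \<in> \<Theta> \<Longrightarrow>
        (\<forall>a\<in>{0,1}. AE x in nuA \<mu>0 \<mu>1 \<mu>Z a. q \<theta> a x = q \<theta>0 a x) \<Longrightarrow> \<theta> = \<theta>0"
    \<comment> \<open>regularity: DQM of sqrt q_a with derivative D_a, nonsingular information\<close>
    and DQM: "\<And>a. a \<in> {0,1} \<Longrightarrow>
        dqm (\<lambda>\<theta> x. sqrt (q \<theta> a x)) (nuA \<mu>0 \<mu>1 \<mu>Z a) \<Theta> \<theta>0 (D a)"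
    and nonsing: "\<And>a. a \<in> {0,1} \<Longrightarrow> invertible (info_matrix (nuA \<mu>0 \<mu>1 \<mu>Z a) (D a))"
    \<comment> \<open>uniformly bounded second moments\<close>
    and moments: "\<exists>C. \<forall>\<theta>\<in>\<Theta>. \<forall>a\<in>{0,1}.
        integrable (nuA \<mu>0 \<mu>1 \<mu>Z a) (\<lambda>x. (fst x)\<^sup>2 * q \<theta> a x) \<and>
        (\<integral>x. (fst x)\<^sup>2 * q \<theta> a x \<partial>(nuA \<mu>0 \<mu>1 \<mu>Z a)) \<le> C"
  shows "((\<lambda>\<theta>. EP \<mu>0 \<mu>1 \<mu>Z \<pi> S (q \<theta>) (phi1 \<pi> S)) has_derivative
           (\<lambda>h. h \<bullet> EP \<mu>0 \<mu>1 \<mu>Z \<pi> S (q \<theta>0)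
                       (\<lambda>y a z. phi1 \<pi> S y a z *\<^sub>R score (q \<theta>0) D y a z))) (at \<theta>0)
       \<and> is_L2_projection \<mu>0 \<mu>1 \<mu>Z \<pi> S (q \<theta>0) (tangent_space \<mu>0 \<mu>1 \<mu>Z \<pi> S (q \<theta>0))
           (phi1 \<pi> S)
           (phi0 \<mu>0 \<mu>1 \<pi> S (q \<theta>0)
              ((\<integral>x. fst x * q \<theta>0 1 x \<partial>(nuA \<mu>0 \<mu>1 \<mu>Z 1))
               - (\<integral>x. fst x * q \<theta>0 0 x \<partial>(nuA \<mu>0 \<mu>1 \<mu>Z 0))))"
proof -
  have nu1: "nuA \<mu>0 \<mu>1 \<mu>Z 1 = \<mu>1 \<Otimes>\<^sub>M \<mu>Z" and nu0: "nuA \<mu>0 \<mu>1 \<mu>Z 0 = \<mu>0 \<Otimes>\<^sub>M \<mu>Z"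
    by (simp_all add: nuA_def)
  interpret P1: pair_sigma_finite \<mu>1 \<mu>Z using sf by (simp add: pair_sigma_finite_def)
  interpret P0: pair_sigma_finite \<mu>0 \<mu>Z using sf by (simp add: pair_sigma_finite_def)
  have pS: "\<And>z. 0 < \<pi> (S z) \<and> \<pi> (S z) < 1" using S_range \<pi>_range by blast
  define c where "c = Min ((\<lambda>s. min (\<pi> s) (1 - \<pi> s)) ` {1..nS})"
  have c: "0 < c" "\<And>z. c \<le> \<pi> (S z)" "\<And>z. c \<le> 1 - \<pi> (S z)"
  proof -
    have ne: "{1..nS} \<noteq> {}" using S_range[of 0] by auto
    show "0 < c" unfolding c_def using ne \<pi>_range by (subst Min_gr_iff) auto
    fix z
    have "c \<le> min (\<pi> (S z)) (1 - \<pi> (S z))" unfolding c_def using S_range[of z] by (intro Min_le) auto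
    then show "c \<le> \<pi> (S z)" "c \<le> 1 - \<pi> (S z)" by auto
  qed
  have Sm: "S \<in> measurable \<mu>Z (count_space UNIV)"
    using S_meas by (simp add: measurable_cong_sets[OF sets_\<mu>Z refl])
  have pm[measurable]: "(\<lambda>z. \<pi> (S z)) \<in> borel_measurable \<mu>Z"
    by (rule measurable_compose[OF Sm]) simp
  obtain C where C: "\<And>\<theta> a. \<theta>\<in>\<Theta> \<Longrightarrow> a\<in>{0,1} \<Longrightarrow>
        integrable (nuA \<mu>0 \<mu>1 \<mu>Z a) (\<lambda>x. (fst x)\<^sup>2 * q \<theta> a x) \<and>
        (\<integral>x. (fst x)\<^sup>2 * q \<theta> a x \<partial>(nuA \<mu>0 \<mu>1 \<mu>Z a)) \<le> C"
    using moments by blast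
  have qnn: "\<And>\<theta> a x. \<theta> \<in> \<Theta> \<Longrightarrow> a \<in> {0,1} \<Longrightarrow> 0 \<le> q \<theta> a x"
    using dens by blast
  have fstm: "\<And>a. a \<in> {0,1} \<Longrightarrow> (\<lambda>x. fst x) \<in> borel_measurable (nuA \<mu>0 \<mu>1 \<mu>Z a)"
  proof -
    fix a :: nat assume "a \<in> {0,1}"
    have "sets (if a = 1 then \<mu>1 else \<mu>0) = sets borel" using sets_\<mu>0 sets_\<mu>1 by simp
    then show "(\<lambda>x. fst x) \<in> borel_measurable (nuA \<mu>0 \<mu>1 \<mu>Z a)"
      unfolding nuA_def by (rule measurable_compose[OF measurable_fst measurable_ident_sets])
  qed
  define V where "V a = (\<integral>x. (2 * fst x * sqrt (q \<theta>0 a x)) *\<^sub>R D a x \<partial>(nuA \<mu>0 \<mu>1 \<mu>Z a))" for a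
  have derA: "\<And>a. a \<in> {0,1} \<Longrightarrow> ((\<lambda>\<theta>. \<integral>x. fst x * q \<theta> a x \<partial>(nuA \<mu>0 \<mu>1 \<mu>Z a)) has_derivative
       (\<lambda>h. h \<bullet> V a)) (at \<theta>0)"
    unfolding V_def
    by (rule dqm_moment_deriv[OF DQM \<Theta>(1) \<Theta>(3), where C=C]) (use dens C fstm in auto)
  have EPphi: "\<And>\<theta>. EP \<mu>0 \<mu>1 \<mu>Z \<pi> S (q \<theta>) (phi1 \<pi> S) =
      (\<integral>x. fst x * q \<theta> 1 x \<partial>(nuA \<mu>0 \<mu>1 \<mu>Z 1)) - (\<integral>x. fst x * q \<theta> 0 x \<partial>(nuA \<mu>0 \<mu>1 \<mu>Z 0))"
  proof -
    fix \<theta>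
    have e1: "(\<integral>x. (q \<theta> 1 x * pw \<pi> S 1 (snd x)) *\<^sub>R phi1 \<pi> S (fst x) 1 (snd x) \<partial>(nuA \<mu>0 \<mu>1 \<mu>Z 1))
        = (\<integral>x. fst x * q \<theta> 1 x \<partial>(nuA \<mu>0 \<mu>1 \<mu>Z 1))"
    proof (rule Bochner_Integration.integral_cong)
      fix x :: "real \<times> (real, 'k) vec"
      have "\<pi> (S (snd x)) \<noteq> 0" using pS[of "snd x"] by simp
      then show "(q \<theta> 1 x * pw \<pi> S 1 (snd x)) *\<^sub>R phi1 \<pi> S (fst x) 1 (snd x) = fst x * q \<theta> 1 x"
        by (simp add: pw_def phi1_def field_simps)
    qed simp
    have e0: "(\<integral>x. (q \<theta> 0 x * pw \<pi> S 0 (snd x)) *\<^sub>R phi1 \<pi> S (fst x) 0 (snd x) \<partial>(nuA \<mu>0 \<mu>1 \<mu>Z 0))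
        = (\<integral>x. - (fst x * q \<theta> 0 x) \<partial>(nuA \<mu>0 \<mu>1 \<mu>Z 0))"
    proof (rule Bochner_Integration.integral_cong)
      fix x :: "real \<times> (real, 'k) vec"
      have "1 - \<pi> (S (snd x)) \<noteq> 0" using pS[of "snd x"] by simp
      then show "(q \<theta> 0 x * pw \<pi> S 0 (snd x)) *\<^sub>R phi1 \<pi> S (fst x) 0 (snd x) = - (fst x * q \<theta> 0 x)"
        by (simp add: pw_def phi1_def field_simps)
    qed simp
    show "EP \<mu>0 \<mu>1 \<mu>Z \<pi> S (q \<theta>) (phi1 \<pi> S) =
      (\<integral>x. fst x * q \<theta> 1 x \<partial>(nuA \<mu>0 \<mu>1 \<mu>Z 1)) - (\<integral>x. fst x * q \<theta> 0 x \<partial>(nuA \<mu>0 \<mu>1 \<mu>Z 0))"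
      unfolding EP_def using e0 e1 by simp
  qed
  have EPscore: "EP \<mu>0 \<mu>1 \<mu>Z \<pi> S (q \<theta>0) (\<lambda>y a z. phi1 \<pi> S y a z *\<^sub>R score (q \<theta>0) D y a z) = V 1 - V 0"
  proof -
    have e1: "(\<integral>x. (q \<theta>0 1 x * pw \<pi> S 1 (snd x)) *\<^sub>R (phi1 \<pi> S (fst x) 1 (snd x) *\<^sub>R score (q \<theta>0) D (fst x) 1 (snd x)) \<partial>(nuA \<mu>0 \<mu>1 \<mu>Z 1))
        = V 1"
      unfolding V_def
    proof (rule Bochner_Integration.integral_cong)
      fix x :: "real \<times> (real, 'k) vec"
      have p: "\<pi> (S (snd x)) \<noteq> 0" using pS[of "snd x"] by simp
      have q0: "0 \<le> q \<theta>0 1 x" using qnn[OF \<Theta>(3), of 1] by simp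
      show "(q \<theta>0 1 x * pw \<pi> S 1 (snd x)) *\<^sub>R (phi1 \<pi> S (fst x) 1 (snd x) *\<^sub>R score (q \<theta>0) D (fst x) 1 (snd x))
          = (2 * fst x * sqrt (q \<theta>0 1 x)) *\<^sub>R D 1 x"
      proof (cases "0 < q \<theta>0 1 x")
        case True
        have "q \<theta>0 1 x / sqrt (q \<theta>0 1 x) = sqrt (q \<theta>0 1 x)"
          using True by (metis real_div_sqrt less_imp_le)
        then show ?thesis using True p
          by (simp add: pw_def phi1_def score_def score_a_def field_simps)
      next
        case False
        then have "q \<theta>0 1 x = 0" using q0 by simp
        then show ?thesis by (simp add: pw_def phi1_def score_def score_a_def)
      qed
    qed simp
    have e0: "(\<integral>x. (q \<theta>0 0 x * pw \<pi> S 0 (snd x)) *\<^sub>R (phi1 \<pi> S (fst x) 0 (snd x) *\<^sub>R score (q \<theta>0) D (fst x) 0 (snd x)) \<partial>(nuA \<mu>0 \<mu>1 \<mu>Z 0))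
        = (\<integral>x. - ((2 * fst x * sqrt (q \<theta>0 0 x)) *\<^sub>R D 0 x) \<partial>(nuA \<mu>0 \<mu>1 \<mu>Z 0))"
    proof (rule Bochner_Integration.integral_cong)
      fix x :: "real \<times> (real, 'k) vec"
      have p: "1 - \<pi> (S (snd x)) \<noteq> 0" using pS[of "snd x"] by simp
      have q0: "0 \<le> q \<theta>0 0 x" using qnn[OF \<Theta>(3), of 0] by simp
      show "(q \<theta>0 0 x * pw \<pi> S 0 (snd x)) *\<^sub>R (phi1 \<pi> S (fst x) 0 (snd x) *\<^sub>R score (q \<theta>0) D (fst x) 0 (snd x))
          = - ((2 * fst x * sqrt (q \<theta>0 0 x)) *\<^sub>R D 0 x)"
      proof (cases "0 < q \<theta>0 0 x")
        case True
        have "q \<theta>0 0 x / sqrt (q \<theta>0 0 x) = sqrt (q \<theta>0 0 x)"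
          using True by (metis real_div_sqrt less_imp_le)
        then show ?thesis using True p
          by (simp add: pw_def phi1_def score_def score_a_def field_simps)
      next
        case False
        then have "q \<theta>0 0 x = 0" using q0 by simp
        then show ?thesis by (simp add: pw_def phi1_def score_def score_a_def)
      qed
    qed simp
    show ?thesis unfolding EP_def using e0 e1 by (simp add: V_def)
  qed
  have part1: "((\<lambda>\<theta>. EP \<mu>0 \<mu>1 \<mu>Z \<pi> S (q \<theta>) (phi1 \<pi> S)) has_derivative
           (\<lambda>h. h \<bullet> EP \<mu>0 \<mu>1 \<mu>Z \<pi> S (q \<theta>0)
                       (\<lambda>y a z. phi1 \<pi> S y a z *\<^sub>R score (q \<theta>0) D y a z))) (at \<theta>0)"
    unfolding EPphi EPscore inner_diff_right
    by (intro has_derivative_diff derA) auto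
  define b0 where "b0 = (\<integral>x. fst x * q \<theta>0 1 x \<partial>(nuA \<mu>0 \<mu>1 \<mu>Z 1)) - (\<integral>x. fst x * q \<theta>0 0 x \<partial>(nuA \<mu>0 \<mu>1 \<mu>Z 0))"
  have A1: "arm \<mu>1 \<mu>Z (q \<theta>0 1)"
  proof (rule arm.intro)
    show "pair_sigma_finite \<mu>1 \<mu>Z" by (rule P1.pair_sigma_finite_axioms)
    show "sets \<mu>1 = sets borel" by (rule sets_\<mu>1)
    show "\<And>x. 0 \<le> q \<theta>0 1 x" using qnn[OF \<Theta>(3)] by simp
    show "integrable (\<mu>1 \<Otimes>\<^sub>M \<mu>Z) (q \<theta>0 1)" using dens[OF \<Theta>(3), of 1] nu1 by simp
    show "integrable (\<mu>1 \<Otimes>\<^sub>M \<mu>Z) (\<lambda>x. (fst x)\<^sup>2 * q \<theta>0 1 x)" using C[OF \<Theta>(3), of 1] nu1 by simp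
  qed
  have A0: "arm \<mu>0 \<mu>Z (q \<theta>0 0)"
  proof (rule arm.intro)
    show "pair_sigma_finite \<mu>0 \<mu>Z" by (rule P0.pair_sigma_finite_axioms)
    show "sets \<mu>0 = sets borel" by (rule sets_\<mu>0)
    show "\<And>x. 0 \<le> q \<theta>0 0 x" using qnn[OF \<Theta>(3)] by simp
    show "integrable (\<mu>0 \<Otimes>\<^sub>M \<mu>Z) (q \<theta>0 0)" using dens[OF \<Theta>(3), of 0] nu0 by simp
    show "integrable (\<mu>0 \<Otimes>\<^sub>M \<mu>Z) (\<lambda>x. (fst x)\<^sup>2 * q \<theta>0 0 x)" using C[OF \<Theta>(3), of 0] nu0 by simp
  qed
  interpret A1: arm \<mu>1 \<mu>Z "q \<theta>0 1" by (rule A1)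
  interpret A0: arm \<mu>0 \<mu>Z "q \<theta>0 0" by (rule A0)
  have marg: "AE z in \<mu>Z. A1.f z = A0.f z"
    unfolding A1.f_def A0.f_def by (rule common_marginal[OF \<Theta>(3)])
  define m1 where "m1 = cond_mean \<mu>1 (q \<theta>0 1)"
  define m0 where "m0 = cond_mean \<mu>0 (q \<theta>0 0)"
  have m1m[measurable]: "m1 \<in> borel_measurable \<mu>Z" unfolding m1_def by (rule A1.cmm)
  have m0m[measurable]: "m0 \<in> borel_measurable \<mu>Z" unfolding m0_def by (rule A0.cmm)
  have q1m[measurable]: "q \<theta>0 1 \<in> borel_measurable (\<mu>1 \<Otimes>\<^sub>M \<mu>Z)" by (rule A1.qm)
  have q0m[measurable]: "q \<theta>0 0 \<in> borel_measurable (\<mu>0 \<Otimes>\<^sub>M \<mu>Z)" by (rule A0.qm)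
  have qnn1: "\<And>x. 0 \<le> q \<theta>0 1 x" and qnn0: "\<And>x. 0 \<le> q \<theta>0 0 x" using qnn[OF \<Theta>(3)] by auto
  have W1y: "wsq (\<mu>1 \<Otimes>\<^sub>M \<mu>Z) (q \<theta>0 1) (\<lambda>x. fst x)"
    by (rule wsqI) (use A1.q2 qnn1 q1m in auto)
  have W0y: "wsq (\<mu>0 \<Otimes>\<^sub>M \<mu>Z) (q \<theta>0 0) (\<lambda>x. fst x)"
    by (rule wsqI) (use A0.q2 qnn0 q0m in auto)
  have W1c: "\<And>k. wsq (\<mu>1 \<Otimes>\<^sub>M \<mu>Z) (q \<theta>0 1) (\<lambda>x. k)" by (rule wsq_const[OF A1.qi qnn1])
  have W0c: "\<And>k. wsq (\<mu>0 \<Otimes>\<^sub>M \<mu>Z) (q \<theta>0 0) (\<lambda>x. k)" by (rule wsq_const[OF A0.qi qnn0])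
  have W1m1: "wsq (\<mu>1 \<Otimes>\<^sub>M \<mu>Z) (q \<theta>0 1) (\<lambda>x. m1 (snd x))"
  proof (rule wsqI)
    show "integrable (\<mu>1 \<Otimes>\<^sub>M \<mu>Z) (\<lambda>x. (m1 (snd x))\<^sup>2 * q \<theta>0 1 x)"
    proof -
      have mm: "(\<lambda>z. (m1 z)\<^sup>2) \<in> borel_measurable \<mu>Z" by measurable
      have "integrable \<mu>Z (\<lambda>z. (m1 z)\<^sup>2 * A1.f z)" using A1.cm_f_int unfolding m1_def .
      from A1.TZ[OF mm _ this] show ?thesis by simp
    qed
  qed (use qnn1 q1m in auto)
  have W0m0: "wsq (\<mu>0 \<Otimes>\<^sub>M \<mu>Z) (q \<theta>0 0) (\<lambda>x. m0 (snd x))"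
  proof (rule wsqI)
    show "integrable (\<mu>0 \<Otimes>\<^sub>M \<mu>Z) (\<lambda>x. (m0 (snd x))\<^sup>2 * q \<theta>0 0 x)"
    proof -
      have mm: "(\<lambda>z. (m0 z)\<^sup>2) \<in> borel_measurable \<mu>Z" by measurable
      have "integrable \<mu>Z (\<lambda>z. (m0 z)\<^sup>2 * A0.f z)" using A0.cm_f_int unfolding m0_def .
      from A0.TZ[OF mm _ this] show ?thesis by simp
    qed
  qed (use qnn0 q0m in auto)
  have W1m0: "wsq (\<mu>1 \<Otimes>\<^sub>M \<mu>Z) (q \<theta>0 1) (\<lambda>x. m0 (snd x))"
  proof (rule wsqI)
    have "integrable \<mu>Z (\<lambda>z. (m0 z)\<^sup>2 * A1.f z)"
    proof (rule integrable_cong_AE_imp[OF A0.cm_f_int])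
      show "(\<lambda>z. (m0 z)\<^sup>2 * A1.f z) \<in> borel_measurable \<mu>Z" by measurable
      show "AE z in \<mu>Z. (cond_mean \<mu>0 (q \<theta>0 0) z)\<^sup>2 * A0.f z = (m0 z)\<^sup>2 * A1.f z"
        using marg by eventually_elim (simp add: m0_def)
    qed
    moreover have mm: "(\<lambda>z. (m0 z)\<^sup>2) \<in> borel_measurable \<mu>Z" by measurable
    ultimately show "integrable (\<mu>1 \<Otimes>\<^sub>M \<mu>Z) (\<lambda>x. (m0 (snd x))\<^sup>2 * q \<theta>0 1 x)"
      using A1.TZ[OF mm] by simp
  qed (use qnn1 q1m in auto)
  have W0m1: "wsq (\<mu>0 \<Otimes>\<^sub>M \<mu>Z) (q \<theta>0 0) (\<lambda>x. m1 (snd x))"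
  proof (rule wsqI)
    have "integrable \<mu>Z (\<lambda>z. (m1 z)\<^sup>2 * A0.f z)"
    proof (rule integrable_cong_AE_imp[OF A1.cm_f_int])
      show "(\<lambda>z. (m1 z)\<^sup>2 * A0.f z) \<in> borel_measurable \<mu>Z" by measurable
      show "AE z in \<mu>Z. (cond_mean \<mu>1 (q \<theta>0 1) z)\<^sup>2 * A1.f z = (m1 z)\<^sup>2 * A0.f z"
        using marg by eventually_elim (simp add: m1_def)
    qed
    moreover have mm: "(\<lambda>z. (m1 z)\<^sup>2) \<in> borel_measurable \<mu>Z" by measurable
    ultimately show "integrable (\<mu>0 \<Otimes>\<^sub>M \<mu>Z) (\<lambda>x. (m1 (snd x))\<^sup>2 * q \<theta>0 0 x)"
      using A0.TZ[OF mm] by simp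
  qed (use qnn0 q0m in auto)
  have pb: "\<And>z. \<bar>\<pi> (S z)\<bar> \<le> 1" "\<And>z. \<bar>1 - \<pi> (S z)\<bar> \<le> 1"
    "\<And>z. \<bar>1 / \<pi> (S z)\<bar> \<le> 1 / c" "\<And>z. \<bar>1 / (1 - \<pi> (S z))\<bar> \<le> 1 / c"
  proof -
    fix z
    show "\<bar>\<pi> (S z)\<bar> \<le> 1" "\<bar>1 - \<pi> (S z)\<bar> \<le> 1" using pS[of z] by auto
    show "\<bar>1 / \<pi> (S z)\<bar> \<le> 1 / c" using pS[of z] c(1) c(2)[of z] by (simp add: frac_le)
    show "\<bar>1 / (1 - \<pi> (S z))\<bar> \<le> 1 / c" using pS[of z] c(1) c(3)[of z] by (simp add: frac_le)
  qed
  have ph1: "\<And>y z. phi0 \<mu>0 \<mu>1 \<pi> S (q \<theta>0) b0 y 1 z = 1 / \<pi> (S z) * (y - m1 z) + (m1 z - m0 z - b0)"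
    by (simp add: phi0_def m1_def m0_def)
  have ph0: "\<And>y z. phi0 \<mu>0 \<mu>1 \<pi> S (q \<theta>0) b0 y 0 z = - (1 / (1 - \<pi> (S z))) * (y - m0 z) + (m1 z - m0 z - b0)"
    by (simp add: phi0_def m1_def m0_def)
  have W1phi: "wsq (\<mu>1 \<Otimes>\<^sub>M \<mu>Z) (q \<theta>0 1) (\<lambda>x. phi0 \<mu>0 \<mu>1 \<pi> S (q \<theta>0) b0 (fst x) 1 (snd x))"
  proof (rule wsq_cong)
    show "wsq (\<mu>1 \<Otimes>\<^sub>M \<mu>Z) (q \<theta>0 1) (\<lambda>x. 1 / \<pi> (S (snd x)) * (fst x - m1 (snd x)) + (m1 (snd x) - m0 (snd x) - b0))"
      by (intro wsq_add wsq_diff W1y W1m1 W1m0 W1c wsq_bounded_mult[where B="1/c"] pb) measurable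
  qed (simp only: ph1)
  have W0phi: "wsq (\<mu>0 \<Otimes>\<^sub>M \<mu>Z) (q \<theta>0 0) (\<lambda>x. phi0 \<mu>0 \<mu>1 \<pi> S (q \<theta>0) b0 (fst x) 0 (snd x))"
  proof (rule wsq_cong)
    show "wsq (\<mu>0 \<Otimes>\<^sub>M \<mu>Z) (q \<theta>0 0) (\<lambda>x. - (1 / (1 - \<pi> (S (snd x)))) * (fst x - m0 (snd x)) + (m1 (snd x) - m0 (snd x) - b0))"
      by (intro wsq_add wsq_diff W0y W0m1 W0m0 W0c wsq_bounded_mult[where B="1/c"]) (use pb in auto)
  qed (simp only: ph0)
  define K where "K z = (m1 z - m0 z - b0) * A1.f z" for z
  have Km[measurable]: "K \<in> borel_measurable \<mu>Z" unfolding K_def by measurable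
  have inner1: "AE z in \<mu>Z. (\<integral>y. phi0 \<mu>0 \<mu>1 \<pi> S (q \<theta>0) b0 y 1 z * q \<theta>0 1 (y, z) \<partial>\<mu>1) = K z"
    using A1.sec A1.e_cm
  proof eventually_elim
    case (elim z)
    have p: "\<pi> (S z) \<noteq> 0" using pS[of z] by simp
    have "(\<integral>y. phi0 \<mu>0 \<mu>1 \<pi> S (q \<theta>0) b0 y 1 z * q \<theta>0 1 (y, z) \<partial>\<mu>1)
        = (\<integral>y. 1 / \<pi> (S z) * (y * q \<theta>0 1 (y, z)) + (m1 z - m0 z - b0 - m1 z / \<pi> (S z)) * q \<theta>0 1 (y, z) \<partial>\<mu>1)"
      unfolding ph1 by (rule Bochner_Integration.integral_cong) (use p in \<open>auto simp: field_simps\<close>)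
    also have "\<dots> = 1 / \<pi> (S z) * A1.e z + (m1 z - m0 z - b0 - m1 z / \<pi> (S z)) * A1.f z"
      using elim by (simp add: A1.e_def A1.f_def)
    also have "\<dots> = K z" using elim p by (simp add: K_def m1_def field_simps)
    finally show ?case .
  qed
  have inner0: "AE z in \<mu>Z. (\<integral>y. phi0 \<mu>0 \<mu>1 \<pi> S (q \<theta>0) b0 y 0 z * q \<theta>0 0 (y, z) \<partial>\<mu>0) = K z"
    using A0.sec A0.e_cm marg
  proof eventually_elim
    case (elim z)
    have p: "1 - \<pi> (S z) \<noteq> 0" using pS[of z] by simp
    have "(\<integral>y. phi0 \<mu>0 \<mu>1 \<pi> S (q \<theta>0) b0 y 0 z * q \<theta>0 0 (y, z) \<partial>\<mu>0)
        = (\<integral>y. (- (1 / (1 - \<pi> (S z)))) * (y * q \<theta>0 0 (y, z)) + (m1 z - m0 z - b0 + m0 z * (1 / (1 - \<pi> (S z)))) * q \<theta>0 0 (y, z) \<partial>\<mu>0)"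
      unfolding ph0 by (rule Bochner_Integration.integral_cong) (simp_all add: algebra_simps diff_divide_distrib add_divide_distrib)
    also have "\<dots> = (- (1 / (1 - \<pi> (S z)))) * A0.e z + (m1 z - m0 z - b0 + m0 z * (1 / (1 - \<pi> (S z)))) * A0.f z"
      using elim by (simp add: A0.e_def A0.f_def)
    also have "\<dots> = K z" using elim by (simp add: K_def m0_def algebra_simps)
    finally show ?case .
  qed
  have e1i: "integrable \<mu>Z A1.e" and e0i: "integrable \<mu>Z A0.e" and f1i: "integrable \<mu>Z A1.f"
    using A1.eint A0.eint A1.fint by auto
  have KAE: "AE z in \<mu>Z. K z = A1.e z - A0.e z - b0 * A1.f z"
    using A1.e_cm A0.e_cm marg by eventually_elim (simp add: K_def m1_def m0_def algebra_simps)
  have Ki: "integrable \<mu>Z K"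
  proof (rule integrable_cong_AE_imp[of _ "\<lambda>z. A1.e z - A0.e z - b0 * A1.f z"])
    show "integrable \<mu>Z (\<lambda>z. A1.e z - A0.e z - b0 * A1.f z)" using e1i e0i f1i by auto
    show "AE z in \<mu>Z. A1.e z - A0.e z - b0 * A1.f z = K z" using KAE by auto
  qed simp
  have f1one: "(\<integral>z. A1.f z \<partial>\<mu>Z) = 1"
    using A1.fint(2) dens[OF \<Theta>(3), of 1] nu1 by simp
  have K0: "(\<integral>z. K z \<partial>\<mu>Z) = 0"
  proof -
    have "(\<integral>z. K z \<partial>\<mu>Z) = (\<integral>z. A1.e z - A0.e z - b0 * A1.f z \<partial>\<mu>Z)"
      by (rule integral_cong_AE) (use KAE in auto)
    also have "\<dots> = (\<integral>z. A1.e z \<partial>\<mu>Z) - (\<integral>z. A0.e z \<partial>\<mu>Z) - b0 * (\<integral>z. A1.f z \<partial>\<mu>Z)"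
      using e1i e0i f1i by simp
    also have "\<dots> = 0"
      unfolding f1one A1.eint(2) A0.eint(2) b0_def nu1 nu0 by simp
    finally show ?thesis .
  qed
  have int1: "(\<integral>x. phi0 \<mu>0 \<mu>1 \<pi> S (q \<theta>0) b0 (fst x) 1 (snd x) * q \<theta>0 1 x \<partial>(nuA \<mu>0 \<mu>1 \<mu>Z 1)) = 0"
  proof -
    have i: "integrable (\<mu>1 \<Otimes>\<^sub>M \<mu>Z) (\<lambda>x. phi0 \<mu>0 \<mu>1 \<pi> S (q \<theta>0) b0 (fst x) 1 (snd x) * q \<theta>0 1 x)"
      using wsq_mult_integrable[OF W1phi W1c[of 1] qnn1] by simp
    have "(\<integral>x. phi0 \<mu>0 \<mu>1 \<pi> S (q \<theta>0) b0 (fst x) 1 (snd x) * q \<theta>0 1 x \<partial>(\<mu>1 \<Otimes>\<^sub>M \<mu>Z))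
        = (\<integral>z. (\<integral>y. phi0 \<mu>0 \<mu>1 \<pi> S (q \<theta>0) b0 y 1 z * q \<theta>0 1 (y, z) \<partial>\<mu>1) \<partial>\<mu>Z)"
      using P1.integral_snd[of "\<lambda>y z. phi0 \<mu>0 \<mu>1 \<pi> S (q \<theta>0) b0 y 1 z * q \<theta>0 1 (y, z)"] i
      by (simp add: case_prod_beta')
    also have "\<dots> = (\<integral>z. K z \<partial>\<mu>Z)"
    proof (rule integral_cong_AE)
      show "(\<lambda>z. \<integral>y. phi0 \<mu>0 \<mu>1 \<pi> S (q \<theta>0) b0 y 1 z * q \<theta>0 1 (y, z) \<partial>\<mu>1) \<in> borel_measurable \<mu>Z"
        using P1.integrable_snd[of "\<lambda>y z. phi0 \<mu>0 \<mu>1 \<pi> S (q \<theta>0) b0 y 1 z * q \<theta>0 1 (y, z)"] i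
        by (simp add: case_prod_beta')
    qed (use inner1 in auto)
    finally show ?thesis using K0 nu1 by simp
  qed
  have int0: "(\<integral>x. phi0 \<mu>0 \<mu>1 \<pi> S (q \<theta>0) b0 (fst x) 0 (snd x) * q \<theta>0 0 x \<partial>(nuA \<mu>0 \<mu>1 \<mu>Z 0)) = 0"
  proof -
    have i: "integrable (\<mu>0 \<Otimes>\<^sub>M \<mu>Z) (\<lambda>x. phi0 \<mu>0 \<mu>1 \<pi> S (q \<theta>0) b0 (fst x) 0 (snd x) * q \<theta>0 0 x)"
      using wsq_mult_integrable[OF W0phi W0c[of 1] qnn0] by simp
    have "(\<integral>x. phi0 \<mu>0 \<mu>1 \<pi> S (q \<theta>0) b0 (fst x) 0 (snd x) * q \<theta>0 0 x \<partial>(\<mu>0 \<Otimes>\<^sub>M \<mu>Z))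
        = (\<integral>z. (\<integral>y. phi0 \<mu>0 \<mu>1 \<pi> S (q \<theta>0) b0 y 0 z * q \<theta>0 0 (y, z) \<partial>\<mu>0) \<partial>\<mu>Z)"
      using P0.integral_snd[of "\<lambda>y z. phi0 \<mu>0 \<mu>1 \<pi> S (q \<theta>0) b0 y 0 z * q \<theta>0 0 (y, z)"] i
      by (simp add: case_prod_beta')
    also have "\<dots> = (\<integral>z. K z \<partial>\<mu>Z)"
    proof (rule integral_cong_AE)
      show "(\<lambda>z. \<integral>y. phi0 \<mu>0 \<mu>1 \<pi> S (q \<theta>0) b0 y 0 z * q \<theta>0 0 (y, z) \<partial>\<mu>0) \<in> borel_measurable \<mu>Z"
        using P0.integrable_snd[of "\<lambda>y z. phi0 \<mu>0 \<mu>1 \<pi> S (q \<theta>0) b0 y 0 z * q \<theta>0 0 (y, z)"] i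
        by (simp add: case_prod_beta')
    qed (use inner0 in auto)
    finally show ?thesis using K0 nu0 by simp
  qed
  have ball01: "\<And>P. P 0 \<Longrightarrow> P 1 \<Longrightarrow> \<forall>a\<in>{0::nat,1}. P a" by auto
  have pm1[measurable]: "(\<lambda>x. \<pi> (S (snd x))) \<in> borel_measurable (\<mu>1 \<Otimes>\<^sub>M \<mu>Z)" by measurable
  have pm0[measurable]: "(\<lambda>x. \<pi> (S (snd x))) \<in> borel_measurable (\<mu>0 \<Otimes>\<^sub>M \<mu>Z)" by measurable
  have phiT: "phi0 \<mu>0 \<mu>1 \<pi> S (q \<theta>0) b0 \<in> tangent_space \<mu>0 \<mu>1 \<mu>Z \<pi> S (q \<theta>0)"
    unfolding tangent_space_def L2P_def mem_Collect_eq
  proof (intro conjI ball01)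
    show "(\<lambda>x. phi0 \<mu>0 \<mu>1 \<pi> S (q \<theta>0) b0 (fst x) 1 (snd x)) \<in> borel_measurable (nuA \<mu>0 \<mu>1 \<mu>Z 1)"
      using wsq_meas[OF W1phi] nu1 by simp
    show "(\<lambda>x. phi0 \<mu>0 \<mu>1 \<pi> S (q \<theta>0) b0 (fst x) 0 (snd x)) \<in> borel_measurable (nuA \<mu>0 \<mu>1 \<mu>Z 0)"
      using wsq_meas[OF W0phi] nu0 by simp
    have phm1[measurable]: "(\<lambda>x. phi0 \<mu>0 \<mu>1 \<pi> S (q \<theta>0) b0 (fst x) 1 (snd x)) \<in> borel_measurable (\<mu>1 \<Otimes>\<^sub>M \<mu>Z)"
      using wsq_meas[OF W1phi] by simp
    have phm0[measurable]: "(\<lambda>x. phi0 \<mu>0 \<mu>1 \<pi> S (q \<theta>0) b0 (fst x) 0 (snd x)) \<in> borel_measurable (\<mu>0 \<Otimes>\<^sub>M \<mu>Z)"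
      using wsq_meas[OF W0phi] by simp
    have "integrable (\<mu>1 \<Otimes>\<^sub>M \<mu>Z) (\<lambda>x. q \<theta>0 1 x * pw \<pi> S 1 (snd x) * (phi0 \<mu>0 \<mu>1 \<pi> S (q \<theta>0) b0 (fst x) 1 (snd x))\<^sup>2)"
    proof (rule Bochner_Integration.integrable_bound[OF wsq_int[OF W1phi qnn1]])
      show "(\<lambda>x. q \<theta>0 1 x * pw \<pi> S 1 (snd x) * (phi0 \<mu>0 \<mu>1 \<pi> S (q \<theta>0) b0 (fst x) 1 (snd x))\<^sup>2) \<in> borel_measurable (\<mu>1 \<Otimes>\<^sub>M \<mu>Z)"
        unfolding pw_def by measurable
      show "AE x in \<mu>1 \<Otimes>\<^sub>M \<mu>Z. norm (q \<theta>0 1 x * pw \<pi> S 1 (snd x) * (phi0 \<mu>0 \<mu>1 \<pi> S (q \<theta>0) b0 (fst x) 1 (snd x))\<^sup>2)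
          \<le> norm ((phi0 \<mu>0 \<mu>1 \<pi> S (q \<theta>0) b0 (fst x) 1 (snd x))\<^sup>2 * q \<theta>0 1 x)"
      proof (rule AE_I2)
        fix x :: "real \<times> (real, 'k) vec"
        have "q \<theta>0 1 x * \<pi> (S (snd x)) \<le> q \<theta>0 1 x * 1"
          using pS[of "snd x"] qnn1[of x] by (intro mult_left_mono) auto
        then show "norm (q \<theta>0 1 x * pw \<pi> S 1 (snd x) * (phi0 \<mu>0 \<mu>1 \<pi> S (q \<theta>0) b0 (fst x) 1 (snd x))\<^sup>2)
          \<le> norm ((phi0 \<mu>0 \<mu>1 \<pi> S (q \<theta>0) b0 (fst x) 1 (snd x))\<^sup>2 * q \<theta>0 1 x)"
          using pS[of "snd x"] qnn1[of x]
          by (simp add: pw_def abs_mult mult_right_mono mult.commute)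
      qed
    qed
    then show "integrable (nuA \<mu>0 \<mu>1 \<mu>Z 1) (\<lambda>x. q \<theta>0 1 x * pw \<pi> S 1 (snd x) * (phi0 \<mu>0 \<mu>1 \<pi> S (q \<theta>0) b0 (fst x) 1 (snd x))\<^sup>2)"
      using nu1 by simp
    have "integrable (\<mu>0 \<Otimes>\<^sub>M \<mu>Z) (\<lambda>x. q \<theta>0 0 x * pw \<pi> S 0 (snd x) * (phi0 \<mu>0 \<mu>1 \<pi> S (q \<theta>0) b0 (fst x) 0 (snd x))\<^sup>2)"
    proof (rule Bochner_Integration.integrable_bound[OF wsq_int[OF W0phi qnn0]])
      show "(\<lambda>x. q \<theta>0 0 x * pw \<pi> S 0 (snd x) * (phi0 \<mu>0 \<mu>1 \<pi> S (q \<theta>0) b0 (fst x) 0 (snd x))\<^sup>2) \<in> borel_measurable (\<mu>0 \<Otimes>\<^sub>M \<mu>Z)"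
        unfolding pw_def by measurable
      show "AE x in \<mu>0 \<Otimes>\<^sub>M \<mu>Z. norm (q \<theta>0 0 x * pw \<pi> S 0 (snd x) * (phi0 \<mu>0 \<mu>1 \<pi> S (q \<theta>0) b0 (fst x) 0 (snd x))\<^sup>2)
          \<le> norm ((phi0 \<mu>0 \<mu>1 \<pi> S (q \<theta>0) b0 (fst x) 0 (snd x))\<^sup>2 * q \<theta>0 0 x)"
      proof (rule AE_I2)
        fix x :: "real \<times> (real, 'k) vec"
        have "q \<theta>0 0 x * (1 - \<pi> (S (snd x))) \<le> q \<theta>0 0 x * 1"
          using pS[of "snd x"] qnn0[of x] by (intro mult_left_mono) auto
        then show "norm (q \<theta>0 0 x * pw \<pi> S 0 (snd x) * (phi0 \<mu>0 \<mu>1 \<pi> S (q \<theta>0) b0 (fst x) 0 (snd x))\<^sup>2)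
          \<le> norm ((phi0 \<mu>0 \<mu>1 \<pi> S (q \<theta>0) b0 (fst x) 0 (snd x))\<^sup>2 * q \<theta>0 0 x)"
          using pS[of "snd x"] qnn0[of x]
          by (simp add: pw_def abs_mult mult_right_mono mult.commute)
      qed
    qed
    then show "integrable (nuA \<mu>0 \<mu>1 \<mu>Z 0) (\<lambda>x. q \<theta>0 0 x * pw \<pi> S 0 (snd x) * (phi0 \<mu>0 \<mu>1 \<pi> S (q \<theta>0) b0 (fst x) 0 (snd x))\<^sup>2)"
      using nu0 by simp
    show "(\<integral>x. phi0 \<mu>0 \<mu>1 \<pi> S (q \<theta>0) b0 (fst x) 0 (snd x) * q \<theta>0 0 x \<partial>(nuA \<mu>0 \<mu>1 \<mu>Z 0)) = 0" by (rule int0)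
    show "(\<integral>x. phi0 \<mu>0 \<mu>1 \<pi> S (q \<theta>0) b0 (fst x) 1 (snd x) * q \<theta>0 1 x \<partial>(nuA \<mu>0 \<mu>1 \<mu>Z 1)) = 0" by (rule int1)
    show "AE z in \<mu>Z. (\<integral>y. phi0 \<mu>0 \<mu>1 \<pi> S (q \<theta>0) b0 y 1 z * q \<theta>0 1 (y, z) \<partial>\<mu>1) =
                      (\<integral>y. phi0 \<mu>0 \<mu>1 \<pi> S (q \<theta>0) b0 y 0 z * q \<theta>0 0 (y, z) \<partial>\<mu>0)"
      using inner1 inner0 by eventually_elim simp
  qed
  have orth: "\<forall>h\<in>tangent_space \<mu>0 \<mu>1 \<mu>Z \<pi> S (q \<theta>0).
      EP \<mu>0 \<mu>1 \<mu>Z \<pi> S (q \<theta>0) (\<lambda>y a z. (phi1 \<pi> S y a z - phi0 \<mu>0 \<mu>1 \<pi> S (q \<theta>0) b0 y a z) * h y a z) = (0::real)"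
  proof
    fix h assume hT: "h \<in> tangent_space \<mu>0 \<mu>1 \<mu>Z \<pi> S (q \<theta>0)"
    then have hL2: "L2P \<mu>0 \<mu>1 \<mu>Z \<pi> S (q \<theta>0) h"
      and hmean1: "(\<integral>x. h (fst x) 1 (snd x) * q \<theta>0 1 x \<partial>(nuA \<mu>0 \<mu>1 \<mu>Z 1)) = 0"
      and hAE: "AE z in \<mu>Z. (\<integral>y. h y 1 z * q \<theta>0 1 (y, z) \<partial>\<mu>1) = (\<integral>y. h y 0 z * q \<theta>0 0 (y, z) \<partial>\<mu>0)"
      unfolding tangent_space_def by auto
    from hL2 have h1m[measurable]: "(\<lambda>x. h (fst x) 1 (snd x)) \<in> borel_measurable (\<mu>1 \<Otimes>\<^sub>M \<mu>Z)"
      and h1i: "integrable (\<mu>1 \<Otimes>\<^sub>M \<mu>Z) (\<lambda>x. q \<theta>0 1 x * pw \<pi> S 1 (snd x) * (h (fst x) 1 (snd x))\<^sup>2)"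
      and h0m[measurable]: "(\<lambda>x. h (fst x) 0 (snd x)) \<in> borel_measurable (\<mu>0 \<Otimes>\<^sub>M \<mu>Z)"
      and h0i: "integrable (\<mu>0 \<Otimes>\<^sub>M \<mu>Z) (\<lambda>x. q \<theta>0 0 x * pw \<pi> S 0 (snd x) * (h (fst x) 0 (snd x))\<^sup>2)"
      unfolding L2P_def using nu1 nu0 by auto
    have W1h: "wsq (\<mu>1 \<Otimes>\<^sub>M \<mu>Z) (q \<theta>0 1) (\<lambda>x. h (fst x) 1 (snd x))"
    proof (rule wsqI)
      show "integrable (\<mu>1 \<Otimes>\<^sub>M \<mu>Z) (\<lambda>x. (h (fst x) 1 (snd x))\<^sup>2 * q \<theta>0 1 x)"
      proof (rule Bochner_Integration.integrable_bound[OF integrable_mult_right[OF h1i, of "1 / c"]])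
        show "(\<lambda>x. (h (fst x) 1 (snd x))\<^sup>2 * q \<theta>0 1 x) \<in> borel_measurable (\<mu>1 \<Otimes>\<^sub>M \<mu>Z)" by measurable
        show "AE x in \<mu>1 \<Otimes>\<^sub>M \<mu>Z. norm ((h (fst x) 1 (snd x))\<^sup>2 * q \<theta>0 1 x)
            \<le> norm (1 / c * (q \<theta>0 1 x * pw \<pi> S 1 (snd x) * (h (fst x) 1 (snd x))\<^sup>2))"
        proof (rule AE_I2)
          fix x :: "real \<times> (real, 'k) vec"
          have "(h (fst x) 1 (snd x))\<^sup>2 * q \<theta>0 1 x = 1 / c * (c * ((h (fst x) 1 (snd x))\<^sup>2 * q \<theta>0 1 x))"
            using c(1) by simp
          also have "\<dots> \<le> 1 / c * (\<pi> (S (snd x)) * ((h (fst x) 1 (snd x))\<^sup>2 * q \<theta>0 1 x))"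
            using c(1) c(2)[of "snd x"] qnn1[of x] by (intro mult_left_mono mult_right_mono) auto
          finally show "norm ((h (fst x) 1 (snd x))\<^sup>2 * q \<theta>0 1 x)
            \<le> norm (1 / c * (q \<theta>0 1 x * pw \<pi> S 1 (snd x) * (h (fst x) 1 (snd x))\<^sup>2))"
            using c(1) pS[of "snd x"] qnn1[of x] by (simp add: pw_def mult_ac)
        qed
      qed
    qed (use qnn1 in auto)
    have W0h: "wsq (\<mu>0 \<Otimes>\<^sub>M \<mu>Z) (q \<theta>0 0) (\<lambda>x. h (fst x) 0 (snd x))"
    proof (rule wsqI)
      show "integrable (\<mu>0 \<Otimes>\<^sub>M \<mu>Z) (\<lambda>x. (h (fst x) 0 (snd x))\<^sup>2 * q \<theta>0 0 x)"
      proof (rule Bochner_Integration.integrable_bound[OF integrable_mult_right[OF h0i, of "1 / c"]])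
        show "(\<lambda>x. (h (fst x) 0 (snd x))\<^sup>2 * q \<theta>0 0 x) \<in> borel_measurable (\<mu>0 \<Otimes>\<^sub>M \<mu>Z)" by measurable
        show "AE x in \<mu>0 \<Otimes>\<^sub>M \<mu>Z. norm ((h (fst x) 0 (snd x))\<^sup>2 * q \<theta>0 0 x)
            \<le> norm (1 / c * (q \<theta>0 0 x * pw \<pi> S 0 (snd x) * (h (fst x) 0 (snd x))\<^sup>2))"
        proof (rule AE_I2)
          fix x :: "real \<times> (real, 'k) vec"
          have "(h (fst x) 0 (snd x))\<^sup>2 * q \<theta>0 0 x = 1 / c * (c * ((h (fst x) 0 (snd x))\<^sup>2 * q \<theta>0 0 x))"
            using c(1) by simp
          also have "\<dots> \<le> 1 / c * ((1 - \<pi> (S (snd x))) * ((h (fst x) 0 (snd x))\<^sup>2 * q \<theta>0 0 x))"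
            using c(1) c(3)[of "snd x"] qnn0[of x] by (intro mult_left_mono mult_right_mono) auto
          finally show "norm ((h (fst x) 0 (snd x))\<^sup>2 * q \<theta>0 0 x)
            \<le> norm (1 / c * (q \<theta>0 0 x * pw \<pi> S 0 (snd x) * (h (fst x) 0 (snd x))\<^sup>2))"
            using c(1) pS[of "snd x"] qnn0[of x] by (simp add: pw_def mult_ac)
        qed
      qed
    qed (use qnn0 in auto)
    define A where "A z = m1 z + \<pi> (S z) * (m0 z - m1 z + b0)" for z
    define B where "B z = - m0 z + (1 - \<pi> (S z)) * (m0 z - m1 z + b0)" for z
    have WA: "wsq (\<mu>1 \<Otimes>\<^sub>M \<mu>Z) (q \<theta>0 1) (\<lambda>x. A (snd x))"
      unfolding A_def by (intro wsq_add wsq_diff W1m1 W1m0 W1c wsq_bounded_mult[where B=1] pb pm1)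
    have WB: "wsq (\<mu>0 \<Otimes>\<^sub>M \<mu>Z) (q \<theta>0 0) (\<lambda>x. B (snd x))"
    proof -
      have "wsq (\<mu>0 \<Otimes>\<^sub>M \<mu>Z) (q \<theta>0 0) (\<lambda>x. (-1) * m0 (snd x) + (1 - \<pi> (S (snd x))) * (m0 (snd x) - m1 (snd x) + b0))"
        by (intro wsq_add wsq_cmult wsq_diff W0m1 W0m0 W0c wsq_bounded_mult[where B=1] pb) measurable
      then show ?thesis unfolding B_def by simp
    qed
    have Am[measurable]: "A \<in> borel_measurable \<mu>Z" unfolding A_def by measurable
    have Bm[measurable]: "B \<in> borel_measurable \<mu>Z" unfolding B_def by measurable
    have iA: "integrable (\<mu>1 \<Otimes>\<^sub>M \<mu>Z) (\<lambda>x. A (snd x) * h (fst x) 1 (snd x) * q \<theta>0 1 x)"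
      by (rule wsq_mult_integrable[OF WA W1h qnn1])
    have iB: "integrable (\<mu>0 \<Otimes>\<^sub>M \<mu>Z) (\<lambda>x. B (snd x) * h (fst x) 0 (snd x) * q \<theta>0 0 x)"
      by (rule wsq_mult_integrable[OF WB W0h qnn0])
    have iG1: "integrable (\<mu>1 \<Otimes>\<^sub>M \<mu>Z) (\<lambda>x. h (fst x) 1 (snd x) * q \<theta>0 1 x)"
      using wsq_mult_integrable[OF W1h W1c[of 1] qnn1] by simp
    define G1 where "G1 z = (\<integral>y. h y 1 z * q \<theta>0 1 (y, z) \<partial>\<mu>1)" for z
    define G0 where "G0 z = (\<integral>y. h y 0 z * q \<theta>0 0 (y, z) \<partial>\<mu>0)" for z
    have G1i: "integrable \<mu>Z G1" and G1int: "(\<integral>z. G1 z \<partial>\<mu>Z) = 0"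
      using P1.integrable_snd[of "\<lambda>y z. h y 1 z * q \<theta>0 1 (y, z)"] P1.integral_snd[of "\<lambda>y z. h y 1 z * q \<theta>0 1 (y, z)"]
        iG1 hmean1 nu1
      by (simp_all add: G1_def[abs_def] case_prod_beta')
    have IA: "integrable \<mu>Z (\<lambda>z. A z * G1 z)"
      "(\<integral>x. A (snd x) * h (fst x) 1 (snd x) * q \<theta>0 1 x \<partial>(\<mu>1 \<Otimes>\<^sub>M \<mu>Z)) = (\<integral>z. A z * G1 z \<partial>\<mu>Z)"
      using P1.integrable_snd[of "\<lambda>y z. A z * h y 1 z * q \<theta>0 1 (y, z)"] P1.integral_snd[of "\<lambda>y z. A z * h y 1 z * q \<theta>0 1 (y, z)"]
        iA by (simp_all add: G1_def case_prod_beta' mult.assoc)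
    have IB: "integrable \<mu>Z (\<lambda>z. B z * G0 z)"
      "(\<integral>x. B (snd x) * h (fst x) 0 (snd x) * q \<theta>0 0 x \<partial>(\<mu>0 \<Otimes>\<^sub>M \<mu>Z)) = (\<integral>z. B z * G0 z \<partial>\<mu>Z)"
      using P0.integrable_snd[of "\<lambda>y z. B z * h y 0 z * q \<theta>0 0 (y, z)"] P0.integral_snd[of "\<lambda>y z. B z * h y 0 z * q \<theta>0 0 (y, z)"]
        iB by (simp_all add: G0_def case_prod_beta' mult.assoc)
    have EPeq: "EP \<mu>0 \<mu>1 \<mu>Z \<pi> S (q \<theta>0) (\<lambda>y a z. (phi1 \<pi> S y a z - phi0 \<mu>0 \<mu>1 \<pi> S (q \<theta>0) b0 y a z) * h y a z)
        = (\<integral>x. A (snd x) * h (fst x) 1 (snd x) * q \<theta>0 1 x \<partial>(\<mu>1 \<Otimes>\<^sub>M \<mu>Z))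
          + (\<integral>x. B (snd x) * h (fst x) 0 (snd x) * q \<theta>0 0 x \<partial>(\<mu>0 \<Otimes>\<^sub>M \<mu>Z))"
    proof -
      have e1: "(\<integral>x. (q \<theta>0 1 x * pw \<pi> S 1 (snd x)) *\<^sub>R ((phi1 \<pi> S (fst x) 1 (snd x) - phi0 \<mu>0 \<mu>1 \<pi> S (q \<theta>0) b0 (fst x) 1 (snd x)) * h (fst x) 1 (snd x)) \<partial>(nuA \<mu>0 \<mu>1 \<mu>Z 1))
          = (\<integral>x. A (snd x) * h (fst x) 1 (snd x) * q \<theta>0 1 x \<partial>(\<mu>1 \<Otimes>\<^sub>M \<mu>Z))"
        unfolding nu1
      proof (rule Bochner_Integration.integral_cong)
        fix x :: "real \<times> (real, 'k) vec"
        have p: "\<pi> (S (snd x)) \<noteq> 0" using pS[of "snd x"] by simp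
        show "(q \<theta>0 1 x * pw \<pi> S 1 (snd x)) *\<^sub>R ((phi1 \<pi> S (fst x) 1 (snd x) - phi0 \<mu>0 \<mu>1 \<pi> S (q \<theta>0) b0 (fst x) 1 (snd x)) * h (fst x) 1 (snd x))
          = A (snd x) * h (fst x) 1 (snd x) * q \<theta>0 1 x"
          unfolding ph1 using p by (simp add: pw_def phi1_def A_def field_simps)
      qed simp
      have e0: "(\<integral>x. (q \<theta>0 0 x * pw \<pi> S 0 (snd x)) *\<^sub>R ((phi1 \<pi> S (fst x) 0 (snd x) - phi0 \<mu>0 \<mu>1 \<pi> S (q \<theta>0) b0 (fst x) 0 (snd x)) * h (fst x) 0 (snd x)) \<partial>(nuA \<mu>0 \<mu>1 \<mu>Z 0))
          = (\<integral>x. B (snd x) * h (fst x) 0 (snd x) * q \<theta>0 0 x \<partial>(\<mu>0 \<Otimes>\<^sub>M \<mu>Z))"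
        unfolding nu0
      proof (rule Bochner_Integration.integral_cong)
        fix x :: "real \<times> (real, 'k) vec"
        have p: "1 - \<pi> (S (snd x)) \<noteq> 0" using pS[of "snd x"] by simp
        show "(q \<theta>0 0 x * pw \<pi> S 0 (snd x)) *\<^sub>R ((phi1 \<pi> S (fst x) 0 (snd x) - phi0 \<mu>0 \<mu>1 \<pi> S (q \<theta>0) b0 (fst x) 0 (snd x)) * h (fst x) 0 (snd x))
          = B (snd x) * h (fst x) 0 (snd x) * q \<theta>0 0 x"
        proof -
          define d where "d = 1 - \<pi> (S (snd x))"
          have pd: "\<pi> (S (snd x)) = 1 - d" and d0: "d \<noteq> 0" using p by (simp_all add: d_def)
          show ?thesis unfolding ph0 pw_def phi1_def B_def pd using d0 by (simp add: field_simps)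
        qed
      qed simp
      show ?thesis unfolding EP_def using e0 e1 by simp
    qed
    have "(\<integral>z. A z * G1 z \<partial>\<mu>Z) + (\<integral>z. B z * G0 z \<partial>\<mu>Z) = (\<integral>z. A z * G1 z + B z * G0 z \<partial>\<mu>Z)"
      using IA(1) IB(1) by simp
    also have "\<dots> = (\<integral>z. b0 * G1 z \<partial>\<mu>Z)"
    proof (rule integral_cong_AE)
      show "(\<lambda>z. A z * G1 z + B z * G0 z) \<in> borel_measurable \<mu>Z"
        using Bochner_Integration.integrable_add[OF IA(1) IB(1)] by (rule borel_measurable_integrable)
      show "(\<lambda>z. b0 * G1 z) \<in> borel_measurable \<mu>Z"
        using G1i by (intro borel_measurable_integrable integrable_mult_right)
      show "AE z in \<mu>Z. A z * G1 z + B z * G0 z = b0 * G1 z"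
        using hAE by eventually_elim (simp add: G1_def[symmetric] G0_def[symmetric] A_def B_def algebra_simps)
    qed
    also have "\<dots> = 0" using G1int by simp
    finally show "EP \<mu>0 \<mu>1 \<mu>Z \<pi> S (q \<theta>0) (\<lambda>y a z. (phi1 \<pi> S y a z - phi0 \<mu>0 \<mu>1 \<pi> S (q \<theta>0) b0 y a z) * h y a z) = 0"
      unfolding EPeq IA(2) IB(2) .
  qed
  have part2: "is_L2_projection \<mu>0 \<mu>1 \<mu>Z \<pi> S (q \<theta>0) (tangent_space \<mu>0 \<mu>1 \<mu>Z \<pi> S (q \<theta>0))
           (phi1 \<pi> S) (phi0 \<mu>0 \<mu>1 \<pi> S (q \<theta>0) b0)"
    unfolding is_L2_projection_def using phiT orth by blast
  show ?thesis using part1 part2 unfolding b0_def by blast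
qed

end
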